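(* A compatible random substitution $\vartheta$ is recognisable if and only if it is locally recognisable.
   Context: A random substitution on a finite alphabet $\mathcal A$ is a map $\vartheta$ from $\mathcal A$ to non-empty finite sets of non-empty words, extended to words by concatenating choices and iterated. Legal words are subwords of words in some $\vartheta^p(a)$; $X_\vartheta\subseteq\mathcal A^{\mathbb Z}$ is the set of sequences all of whose subwords are legal, with shift $\sigma(x)_i=x_{i+1}$. For $y\in\mathcal A^{\mathbb Z}$, $\vartheta(y)$ is the set of sequences $\cdots w_{-1}w_0w_1\cdots$ with $w_i\in\vartheta(y_i)$, $w_0$ starting at index $0$. $\vartheta$ is compatible if for each $a$ all words in $\vartheta(a)$ have the same letter counts (so $|\vartheta(a)|$ is well defined). A compatible $\vartheta$ is recognisable if for every $x\in X_\vartheta$ there are a unique $y\in X_\vartheta$ and a unique $0\le k\le|\vartheta(y_0)|-1$ with $\sigma^{-k}(x)\in\vartheta(y)$. Inflation word decompositions: for a legal word $u$, a pair $([u_1,\ldots,u_\ell],v)$ with non-empty words $u_i$, $u_1\cdots u_\ell=u$, and a legal word $v=v_1\cdots v_\ell$ ($v_i$ letters) such that $u_i\in\vartheta(v_i)$ for $2\le i\le\ell-1$, $u_1$ is a suffix of a word in $\vartheta(v_1)$, and $u_\ell$ is a prefix of a word in $\vartheta(v_\ell)$. A decomposition of $u$ induces a decomposition on any subword occurrence $u_{[i,j]}$ by cutting the first and last relevant pieces at positions $i,j$ and keeping the corresponding segment $v_{[k(i),k(j)]}$ of the root. A legal word $u$ is recognisable with radius $N$ if for every legal word $w=u^{(l)}uu^{(r)}$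 with $|u^{(l)}|=|u^{(r)}|=N$, all inflation word decompositions of $w$ induce the same decomposition on the central occurrence of $u$; the radius of recognisability of $u$ is the least such $N$. $\vartheta$ is locally recognisable if there is $N$ such that every legal word is recognisable with radius of recognisability at most $N$. *)

theory Defs
  imports Main "HOL-Library.Sublist" "HOL-Library.Multiset"
begin

definition random_subst :: "('a::finite \<Rightarrow> 'a list set) \<Rightarrow> bool" where
  "random_subst \<theta> \<longleftrightarrow> (\<forall>a. finite (\<theta> a) \<and> \<theta> a \<noteq> {} \<and> (\<forall>u\<in>\<theta> a. u \<noteq> []))"

definition subst_word :: "('a \<Rightarrow> 'a list set) \<Rightarrow> 'a list \<Rightarrow> 'a list set" where
  "subst_word \<theta> w = {concat us | us. list_all2 (\<lambda>u a. u \<in> \<theta> a) us w}"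

fun subst_pow :: "('a \<Rightarrow> 'a list set) \<Rightarrow> nat \<Rightarrow> 'a list \<Rightarrow> 'a list set" where
  "subst_pow \<theta> 0 w = {w}"
| "subst_pow \<theta> (Suc p) w = (\<Union>v\<in>subst_pow \<theta> p w. subst_word \<theta> v)"

definition legal :: "('a \<Rightarrow> 'a list set) \<Rightarrow> 'a list \<Rightarrow> bool" where
  "legal \<theta> u \<longleftrightarrow> (\<exists>p a. \<exists>w\<in>subst_pow \<theta> p [a]. sublist u w)"

definition seq_word :: "(int \<Rightarrow> 'a) \<Rightarrow> int \<Rightarrow> nat \<Rightarrow> 'a list" where
  "seq_word x i n = map (\<lambda>k. x (i + int k)) [0..<n]"

definition subshift :: "('a \<Rightarrow> 'a list set) \<Rightarrow> (int \<Rightarrow> 'a) set" where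
  "subshift \<theta> = {x. \<forall>i n. legal \<theta> (seq_word x i n)}"

text \<open>theta(y) for a bi-infinite sequence y: sequences ... w_(-1) w_0 w_1 ... with
  w_i in theta(y_i) and w_0 starting at index 0; c i is the starting index of w_i.\<close>
definition subst_seq :: "('a \<Rightarrow> 'a list set) \<Rightarrow> (int \<Rightarrow> 'a) \<Rightarrow> (int \<Rightarrow> 'a) set" where
  "subst_seq \<theta> y = {x. \<exists>w :: int \<Rightarrow> 'a list. \<exists>c :: int \<Rightarrow> int.
      (\<forall>i. w i \<in> \<theta> (y i)) \<and> c 0 = 0 \<and>
      (\<forall>i. c (i + 1) = c i + int (length (w i))) \<and>
      (\<forall>i k. k < length (w i) \<longrightarrow> x (c i + int k) = w i ! k)}"

definition shift :: "(int \<Rightarrow> 'a) \<Rightarrow> int \<Rightarrow> 'a" where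
  "shift x = (\<lambda>i. x (i + 1))"

definition shift_pow :: "int \<Rightarrow> (int \<Rightarrow> 'a) \<Rightarrow> int \<Rightarrow> 'a" where
  "shift_pow n x = (\<lambda>i. x (i + n))"

definition compatible :: "('a \<Rightarrow> 'a list set) \<Rightarrow> bool" where
  "compatible \<theta> \<longleftrightarrow> (\<forall>a u v. u \<in> \<theta> a \<longrightarrow> v \<in> \<theta> a \<longrightarrow> mset u = mset v)"

text \<open>|theta(a)|, well defined for compatible theta.\<close>
definition infl_len :: "('a \<Rightarrow> 'a list set) \<Rightarrow> 'a \<Rightarrow> nat" where
  "infl_len \<theta> a = length (SOME u. u \<in> \<theta> a)"

definition recognisable :: "('a::finite \<Rightarrow> 'a list set) \<Rightarrow> bool" where
  "recognisable \<theta> \<longleftrightarrow> compatible \<theta> \<and>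
     (\<forall>x\<in>subshift \<theta>. \<exists>!(y, k). y \<in> subshift \<theta> \<and> k < infl_len \<theta> (y 0) \<and>
         shift_pow (- int k) x \<in> subst_seq \<theta> y)"

definition infl_decomps :: "('a \<Rightarrow> 'a list set) \<Rightarrow> 'a list \<Rightarrow> ('a list list \<times> 'a list) set" where
  "infl_decomps \<theta> u = {(us, v). length us = length v \<and> (\<forall>p\<in>set us. p \<noteq> []) \<and>
      concat us = u \<and> legal \<theta> v \<and>
      (\<forall>i. 0 < i \<and> i + 1 < length us \<longrightarrow> us ! i \<in> \<theta> (v ! i)) \<and>
      (us \<noteq> [] \<longrightarrow> (\<exists>t\<in>\<theta> (v ! 0). suffix (us ! 0) t) \<and>
                    (\<exists>t\<in>\<theta> (v ! (length v - 1)). prefix (us ! (length us - 1)) t))}"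

definition piece_start :: "'a list list \<Rightarrow> nat \<Rightarrow> nat" where
  "piece_start us k = length (concat (take k us))"

definition piece_idx :: "'a list list \<Rightarrow> nat \<Rightarrow> nat" where
  "piece_idx us i = (LEAST k. i < length (concat (take (Suc k) us)))"

text \<open>Decomposition induced by (us, v) on the occurrence of length m (m \<ge> 1) starting
  at position i: the relevant pieces, with the first and last cut at the occurrence
  boundaries, and the corresponding segment of the root.\<close>
definition induced_decomp ::
  "'a list list \<times> 'a list \<Rightarrow> nat \<Rightarrow> nat \<Rightarrow> 'a list list \<times> 'a list" where
  "induced_decomp d i m =
     (let us = fst d; v = snd d;
          ka = piece_idx us i; kb = piece_idx us (i + m - 1)
      in (map (\<lambda>k. drop (i - piece_start us k) (take (i + m - piece_start us k) (us ! k)))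
              [ka..<Suc kb],
          take (Suc kb - ka) (drop ka v)))"

definition recognisable_radius :: "('a \<Rightarrow> 'a list set) \<Rightarrow> 'a list \<Rightarrow> nat \<Rightarrow> bool" where
  "recognisable_radius \<theta> u N \<longleftrightarrow>
     (\<forall>ul ur. length ul = N \<longrightarrow> length ur = N \<longrightarrow> legal \<theta> (ul @ u @ ur) \<longrightarrow>
        (\<forall>d1\<in>infl_decomps \<theta> (ul @ u @ ur). \<forall>d2\<in>infl_decomps \<theta> (ul @ u @ ur).
            induced_decomp d1 N (length u) = induced_decomp d2 N (length u)))"

text \<open>Locally recognisable: a uniform bound N on the radius of recognisability
  (the least radius) of every (non-empty) legal word.\<close>
definition locally_recognisable :: "('a \<Rightarrow> 'a list set) \<Rightarrow> bool" where
  "locally_recognisable \<theta> \<longleftrightarrow>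
     (\<exists>N. \<forall>u. legal \<theta> u \<and> u \<noteq> [] \<longrightarrow> (\<exists>N'\<le>N. recognisable_radius \<theta> u N'))"

end

theory Submission
  imports Defs
begin

lemma ps_0[simp]: "piece_start us 0 = 0" by (simp add: piece_start_def)

lemma ps_Suc: "q < length us \<Longrightarrow> piece_start us (Suc q) = piece_start us q + length (us ! q)"
  by (simp add: piece_start_def take_Suc_conv_app_nth)

lemma ps_Cons_Suc[simp]: "piece_start (p # us) (Suc q) = length p + piece_start us q"
  by (simp add: piece_start_def)

lemma ps_mono: "q \<le> q' \<Longrightarrow> piece_start us q \<le> piece_start us q'"
proof -
  assume "q \<le> q'"
  then have "take q us = take q (take q' us)" by (simp add: min_def)
  then have "concat (take q' us) = concat (take q us) @ concat (drop q (take q' us))"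
    by (metis append_take_drop_id concat_append)
  then show ?thesis unfolding piece_start_def by (metis le_add1 length_append)
qed

lemma ps_ge_len: "length us \<le> q \<Longrightarrow> piece_start us q = length (concat us)"
  by (simp add: piece_start_def)

lemma ps_len: "piece_start us (length us) = length (concat us)"
  by (simp add: piece_start_def)

lemma ps_le_total: "piece_start us q \<le> length (concat us)"
  by (metis nat_le_linear ps_ge_len ps_len ps_mono)

lemma pidx_eq: "piece_start us q \<le> j \<Longrightarrow> j < piece_start us (Suc q) \<Longrightarrow> piece_idx us j = q"
  unfolding piece_idx_def
proof (rule Least_equality)
  assume "j < piece_start us (Suc q)"
  then show "j < length (concat (take (Suc q) us))" by (simp add: piece_start_def)
next
  fix k assume a: "piece_start us q \<le> j" and b: "j < length (concat (take (Suc k) us))"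
  show "q \<le> k"
  proof (rule ccontr)
    assume "\<not> q \<le> k"
    then have "piece_start us (Suc k) \<le> piece_start us q" by (intro ps_mono) simp
    with a b show False by (simp add: piece_start_def)
  qed
qed

lemma pidx_range:
  assumes "j < length (concat us)"
  shows "piece_idx us j < length us \<and> piece_start us (piece_idx us j) \<le> j \<and>
         j < piece_start us (Suc (piece_idx us j))"
proof -
  let ?P = "\<lambda>k. j < length (concat (take (Suc k) us))"
  have ne: "us \<noteq> []" using assms by auto
  have P1: "?P (length us - 1)" using assms ne by simp
  have k: "piece_idx us j = (LEAST k. ?P k)" by (simp add: piece_idx_def)
  have "?P (piece_idx us j)" unfolding k by (rule LeastI[of ?P, OF P1])
  moreover have "piece_idx us j \<le> length us - 1" unfolding k by (rule Least_le[of ?P, OF P1])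
  then have "piece_idx us j < length us" using ne by (cases us) auto
  moreover have "piece_start us (piece_idx us j) \<le> j"
  proof (cases "piece_idx us j")
    case 0 then show ?thesis by simp
  next
    case (Suc k')
    then have "\<not> ?P k'" using not_less_Least[of k' ?P] k by (metis lessI)
    then show ?thesis using Suc by (simp add: piece_start_def)
  qed
  ultimately show ?thesis by (auto simp: piece_start_def)
qed

lemma pidx_mono:
  assumes "j \<le> j'" "j' < length (concat us)"
  shows "piece_idx us j \<le> piece_idx us j'"
proof (rule ccontr)
  assume "\<not> ?thesis"
  then have "Suc (piece_idx us j') \<le> piece_idx us j" by simp
  then have "piece_start us (Suc (piece_idx us j')) \<le> piece_start us (piece_idx us j)" by (rule ps_mono)
  moreover have "piece_start us (piece_idx us j) \<le> j" using pidx_range[of j us] assms by simp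
  moreover have "j' < piece_start us (Suc (piece_idx us j'))" using pidx_range[of j' us] assms by simp
  ultimately show False using assms by simp
qed

lemma concat_nth_pidx:
  assumes "j < length (concat us)"
  shows "concat us ! j = (us ! piece_idx us j) ! (j - piece_start us (piece_idx us j))"
proof -
  let ?k = "piece_idx us j"
  from pidx_range[OF assms] have r: "?k < length us" "piece_start us ?k \<le> j"
    "j < piece_start us (Suc ?k)" by auto
  have "us = take ?k us @ us ! ?k # drop (Suc ?k) us" using r(1) by (rule id_take_nth_drop)
  then have e: "concat us = concat (take ?k us) @ us ! ?k @ concat (drop (Suc ?k) us)"
    by (metis concat.simps(2) concat_append)
  have l: "length (concat (take ?k us)) = piece_start us ?k" by (simp add: piece_start_def)
  have "j - piece_start us ?k < length (us ! ?k)" using r ps_Suc[OF r(1)] by simp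
  then show ?thesis using r(2) unfolding e by (simp add: nth_append l)
qed

definition nonempty_pieces :: "'a list list \<Rightarrow> bool" where
  "nonempty_pieces us \<longleftrightarrow> (\<forall>p\<in>set us. p \<noteq> [])"

lemma ps_strict:
  assumes "nonempty_pieces us" "q < q'" "q' \<le> length us"
  shows "piece_start us q < piece_start us q'"
proof -
  have "q < length us" using assms by simp
  moreover have "us ! q \<noteq> []" using assms(1) \<open>q < length us\<close> nth_mem unfolding nonempty_pieces_def by blast
  ultimately have "piece_start us q < piece_start us (Suc q)"
    using ps_Suc[OF \<open>q < length us\<close>] by simp
  also have "\<dots> \<le> piece_start us q'" using assms by (intro ps_mono) simp
  finally show ?thesis .
qed

definition dstart :: "'a list list \<Rightarrow> nat \<Rightarrow> bool" where
  "dstart us j \<longleftrightarrow> (\<exists>q<length us. piece_start us q = j)"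

definition droot :: "'a list list \<times> 'a list \<Rightarrow> nat \<Rightarrow> 'a" where
  "droot d j = snd d ! piece_idx (fst d) j"

lemma dstart_iff:
  assumes "nonempty_pieces us" "j < length (concat us)"
  shows "dstart us j \<longleftrightarrow> piece_start us (piece_idx us j) = j"
proof
  assume "dstart us j"
  then obtain q where q: "q < length us" "piece_start us q = j" by (auto simp: dstart_def)
  have "j < piece_start us (Suc q)" using ps_strict[OF assms(1), of q "Suc q"] q by simp
  then have "piece_idx us j = q" using q by (intro pidx_eq) auto
  then show "piece_start us (piece_idx us j) = j" using q by simp
next
  assume "piece_start us (piece_idx us j) = j"
  then show "dstart us j" using pidx_range[OF assms(2)] by (auto simp: dstart_def)
qed


lemma pidx_Cons_lt: "j < length p \<Longrightarrow> piece_idx (p # us) j = 0"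
  by (rule pidx_eq) (simp_all add: piece_start_def)

lemma pidx_Cons_ge:
  assumes "j < length (concat us)"
  shows "piece_idx (p # us) (length p + j) = Suc (piece_idx us j)"
  using pidx_range[OF assms] by (intro pidx_eq) simp_all

lemma dstart_Cons: "p \<noteq> [] \<Longrightarrow> dstart (p # us) (length p + j) = dstart us j"
  unfolding dstart_def
proof
  assume "p \<noteq> []" "\<exists>q<length (p # us). piece_start (p # us) q = length p + j"
  then obtain q where q: "q < length (p # us)" "piece_start (p # us) q = length p + j" by blast
  then show "\<exists>q<length us. piece_start us q = j" using \<open>p \<noteq> []\<close>
    by (cases q) auto
next
  assume "\<exists>q<length us. piece_start us q = j"
  then obtain q where "q < length us" "piece_start us q = j" by blast
  then show "\<exists>q<length (p # us). piece_start (p # us) q = length p + j"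
    by (intro exI[of _ "Suc q"]) simp
qed

lemma dstart_0: "us \<noteq> [] \<Longrightarrow> dstart us 0"
  unfolding dstart_def by (intro exI[of _ 0]) simp

lemma dstart_Cons_mid: "0 < j \<Longrightarrow> j < length p \<Longrightarrow> \<not> dstart (p # us) j"
  unfolding dstart_def
proof
  assume "0 < j" "j < length p" "\<exists>q<length (p # us). piece_start (p # us) q = j"
  then obtain q where q: "piece_start (p # us) q = j" by blast
  then show False using \<open>0 < j\<close> \<open>j < length p\<close> by (cases q) auto
qed

lemma nonempty_pieces_Cons[simp]: "nonempty_pieces (p # us) \<longleftrightarrow> p \<noteq> [] \<and> nonempty_pieces us"
  by (simp add: nonempty_pieces_def)

lemma nonempty_pieces_Nil[simp]: "nonempty_pieces []"
  by (simp add: nonempty_pieces_def)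

lemma det:
  assumes "nonempty_pieces us1" "nonempty_pieces us2" "concat us1 = concat us2"
    "length v1 = length us1" "length v2 = length us2"
    "\<forall>j<length (concat us1). dstart us1 j = dstart us2 j \<and> droot (us1,v1) j = droot (us2,v2) j"
  shows "us1 = us2 \<and> v1 = v2"
  using assms
proof (induction us1 arbitrary: us2 v1 v2)
  case Nil
  then have "us2 = []" by (cases us2) auto
  then show ?case using Nil by simp
next
  case (Cons p us1')
  have pne: "p \<noteq> []" using Cons.prems(1) by simp
  obtain p' us2' where us2: "us2 = p' # us2'"
    using Cons.prems(3) pne by (cases us2) auto
  have p'ne: "p' \<noteq> []" using Cons.prems(2) us2 by simp
  obtain a v1' where v1: "v1 = a # v1'" using Cons.prems(4) by (cases v1) auto
  obtain a' v2' where v2: "v2 = a' # v2'" using Cons.prems(5) us2 by (cases v2) auto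
  have tot: "length (concat (p # us1')) = length p + length (concat us1')" by simp
  have tot2: "length (concat (p # us1')) = length p' + length (concat us2')"
    using Cons.prems(3) us2 by simp
  have H: "\<And>j. j < length (concat (p # us1')) \<Longrightarrow> dstart (p # us1') j = dstart us2 j"
    using Cons.prems(6) by blast
  have "length p = length p'"
  proof (rule ccontr)
    assume "length p \<noteq> length p'"
    then consider "length p < length p'" | "length p' < length p" by linarith
    then show False
    proof cases
      case 1
      then have "us1' \<noteq> []" using tot tot2 by auto
      then have "dstart (p # us1') (length p + 0)" using dstart_Cons[OF pne] dstart_0 by metis
      moreover have "\<not> dstart us2 (length p)" unfolding us2 using 1 pne
        by (intro dstart_Cons_mid) auto
      moreover have "length p < length (concat (p # us1'))" using 1 tot2 by linarith
      ultimately show False using H[of "length p"] by simp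
    next
      case 2
      then have "us2' \<noteq> []" using tot tot2 by auto
      then have "dstart (p' # us2') (length p' + 0)" using dstart_Cons[OF p'ne] dstart_0 by metis
      moreover have "\<not> dstart (p # us1') (length p')" using 2 p'ne
        by (intro dstart_Cons_mid) auto
      moreover have "length p' < length (concat (p # us1'))" using 2 tot by linarith
      ultimately show False using H[of "length p'"] us2 by simp
    qed
  qed
  then have pp: "p = p'" using Cons.prems(3) us2
    by (metis append_eq_append_conv concat.simps(2))
  then have cc: "concat us1' = concat us2'" using Cons.prems(3) us2 by simp
  have "droot (p # us1', v1) 0 = droot (us2, v2) 0" using Cons.prems(6) pne by simp
  then have aa: "a = a'" using pidx_Cons_lt[of 0 p] pidx_Cons_lt[of 0 p'] pne p'ne v1 v2 us2
    by (simp add: droot_def)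
  have "us1' = us2' \<and> v1' = v2'"
  proof (rule Cons.IH)
    show "nonempty_pieces us1'" "nonempty_pieces us2'" "concat us1' = concat us2'"
      "length v1' = length us1'" "length v2' = length us2'"
      using Cons.prems us2 v1 v2 cc by auto
    show "\<forall>j<length (concat us1'). dstart us1' j = dstart us2' j \<and> droot (us1', v1') j = droot (us2', v2') j"
    proof (intro allI impI)
      fix j assume j: "j < length (concat us1')"
      then have j2: "j < length (concat us2')" using cc by simp
      have "dstart (p # us1') (length p + j) = dstart us2 (length p + j)
            \<and> droot (p # us1', v1) (length p + j) = droot (us2, v2) (length p + j)"
        using Cons.prems(6) j by simp
      then show "dstart us1' j = dstart us2' j \<and> droot (us1', v1') j = droot (us2', v2') j"
        using dstart_Cons[OF pne] dstart_Cons[OF p'ne] pidx_Cons_ge[OF j, of p]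
          pidx_Cons_ge[OF j2, of p'] us2 pp v1 v2
        by (simp add: droot_def)
    qed
  qed
  then show ?case using us2 pp aa v1 v2 by simp
qed


lemma induced_props:
  fixes us :: "'a list list" and v :: "'a list"
  assumes ne: "nonempty_pieces us" and lv: "length v = length us" and m: "0 < m"
    and im: "i + m \<le> length (concat us)"
  shows "nonempty_pieces (fst (induced_decomp (us, v) i m))"
    "length (snd (induced_decomp (us, v) i m)) = length (fst (induced_decomp (us, v) i m))"
    "concat (fst (induced_decomp (us, v) i m)) = take m (drop i (concat us))"
    "\<forall>j<m. droot (induced_decomp (us, v) i m) j = droot (us,v) (i+j)"
    "\<forall>j<m. dstart (fst (induced_decomp (us, v) i m)) j = (j = 0 \<or> dstart us (i+j))"
proof -
  define ps where "ps = piece_start us"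
  define ka where "ka = piece_idx us i"
  define kb where "kb = piece_idx us (i + m - 1)"
  define f where "f k = drop (i - ps k) (take (i + m - ps k) (us ! k))" for k
  define n' where "n' = Suc kb - ka"
  define us' where "us' = map (\<lambda>q. f (ka + q)) [0..<n']"
  define v' where "v' = take n' (drop ka v)"
  have "map f [ka..<Suc kb] = us'"
    unfolding us'_def by (rule nth_equalityI) (simp_all add: n'_def nth_upt del: upt_Suc)
  then have d': "induced_decomp (us, v) i m = (us', v')"
    unfolding induced_decomp_def Let_def v'_def f_def ps_def ka_def kb_def n'_def by simp
  have ra: "ka < length us" "ps ka \<le> i" "i < ps (Suc ka)"
    using pidx_range[of i us] im m unfolding ka_def ps_def by auto
  have rb: "kb < length us" "ps kb \<le> i + m - 1" "i + m - 1 < ps (Suc kb)"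
    using pidx_range[of "i + m - 1" us] im m unfolding kb_def ps_def by auto
  have kab: "ka \<le> kb" unfolding ka_def kb_def using im m by (intro pidx_mono) auto
  have lus: "length (us ! k) = ps (Suc k) - ps k" if "k < length us" for k
    using ps_Suc[OF that] unfolding ps_def by simp
  have psm: "ps k \<le> ps k'" if "k \<le> k'" for k k' unfolding ps_def using that by (rule ps_mono)
  have pss: "ps k < ps (Suc k)" if "k < length us" for k
    unfolding ps_def using ps_strict[OF ne, of k "Suc k"] that by simp
  have bnd: "ps k \<le> i + m - 1" "i < ps (Suc k)" if "ka \<le> k" "k \<le> kb" for k
  proof -
    have "ps k \<le> ps kb" using psm that by simp
    then show "ps k \<le> i + m - 1" using rb by simp
    have "ps (Suc k) \<ge> ps (Suc ka)" using psm that by simp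
    then show "i < ps (Suc k)" using ra by simp
  qed
  have lenf: "length (f k) = min (i + m) (ps (Suc k)) - max i (ps k)"
    if "ka \<le> k" "k \<le> kb" for k
  proof -
    have k: "k < length us" using that rb by simp
    have "length (f k) = min (i + m - ps k) (length (us ! k)) - (i - ps k)"
      unfolding f_def by simp
    then show ?thesis using lus[OF k] pss[OF k] bnd[OF that] m
      by (auto simp: min_def max_def)
  qed
  have posf: "f k \<noteq> []" if "ka \<le> k" "k \<le> kb" for k
  proof -
    have k: "k < length us" using that rb by simp
    have "0 < min (i + m) (ps (Suc k)) - max i (ps k)"
      using pss[OF k] bnd[OF that] m by (auto simp: min_def max_def)
    then show ?thesis using lenf[OF that] by auto
  qed
  have lus': "length us' = n'" unfolding us'_def by simp
  have nth': "us' ! q = f (ka + q)" if "q < n'" for q unfolding us'_def using that by simp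
  have ps': "piece_start us' q = min (i + m) (max i (ps (ka + q))) - i" if "q \<le> n'" for q
    using that
  proof (induction q)
    case 0 then show ?case using ra by (simp add: max_def)
  next
    case (Suc q)
    then have q: "q < length us'" using lus' by simp
    have kq: "ka \<le> ka + q" "ka + q \<le> kb" using Suc.prems n'_def by auto
    have "piece_start us' (Suc q) = piece_start us' q + length (f (ka + q))"
      using ps_Suc[OF q] nth' q lus' by simp
    also have "\<dots> = min (i + m) (max i (ps (ka + q))) - i + (min (i + m) (ps (Suc (ka + q))) - max i (ps (ka + q)))"
      using Suc lenf[OF kq] by simp
    also have "\<dots> = min (i + m) (max i (ps (ka + Suc q))) - i"
      using bnd[OF kq] m psm[of "ka+q" "Suc (ka+q)"] by (auto simp: min_def max_def)
    finally show ?case .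
  qed
  have lconc: "length (concat us') = m"
  proof -
    have "length (concat us') = piece_start us' (length us')" by (simp add: ps_len)
    also have "\<dots> = min (i + m) (max i (ps (Suc kb))) - i" using ps' lus' kab n'_def by simp
    also have "\<dots> = m" using rb ra m by (auto simp: min_def max_def)
    finally show ?thesis .
  qed
  have pj: "piece_idx us (i + j) = ka + piece_idx us' j \<and> ka \<le> piece_idx us (i + j)
      \<and> piece_idx us (i + j) \<le> kb \<and> piece_idx us' j < n'" if j: "j < m" for j
  proof -
    define q0 where "q0 = piece_idx us (i + j)"
    have r0: "q0 < length us" "ps q0 \<le> i + j" "i + j < ps (Suc q0)"
      using pidx_range[of "i + j" us] im j unfolding q0_def ps_def by auto
    have "ka \<le> q0" unfolding ka_def q0_def using im j by (intro pidx_mono) auto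
    moreover have "q0 \<le> kb" unfolding kb_def q0_def using im j by (intro pidx_mono) auto
    moreover have "piece_idx us' j = q0 - ka"
    proof (rule pidx_eq)
      have "piece_start us' (q0 - ka) = min (i + m) (max i (ps q0)) - i"
        using ps' \<open>ka \<le> q0\<close> \<open>q0 \<le> kb\<close> n'_def by simp
      then show "piece_start us' (q0 - ka) \<le> j" using r0 by (auto simp: min_def max_def)
      have "Suc (q0 - ka) \<le> n'" using \<open>ka \<le> q0\<close> \<open>q0 \<le> kb\<close> n'_def by simp
      moreover have "ka + Suc (q0 - ka) = Suc q0" using \<open>ka \<le> q0\<close> by simp
      ultimately have "piece_start us' (Suc (q0 - ka)) = min (i + m) (max i (ps (Suc q0))) - i"
        using ps'[of "Suc (q0 - ka)"] by simp
      then show "j < piece_start us' (Suc (q0 - ka))" using r0 j by (auto simp: min_def max_def)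
    qed
    ultimately show ?thesis unfolding q0_def n'_def by simp
  qed
  show "nonempty_pieces (fst (induced_decomp (us, v) i m))"
    unfolding d' nonempty_pieces_def us'_def n'_def using posf by auto
  show "length (snd (induced_decomp (us, v) i m)) = length (fst (induced_decomp (us, v) i m))"
    unfolding d' using lus' lv rb kab by (simp add: v'_def n'_def)
  show "concat (fst (induced_decomp (us, v) i m)) = take m (drop i (concat us))"
  proof -
    have "concat us' ! j = take m (drop i (concat us)) ! j" if j: "j < m" for j
    proof -
      define q0 where "q0 = piece_idx us (i + j)"
      have r0: "q0 < length us" "ps q0 \<le> i + j" "i + j < ps (Suc q0)"
        using pidx_range[of "i + j" us] im j unfolding q0_def ps_def by auto
      have pj': "q0 = ka + piece_idx us' j" "ka \<le> q0" "q0 \<le> kb" "piece_idx us' j < n'"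
        using pj[OF j] q0_def by auto
      have "concat us' ! j = (us' ! piece_idx us' j) ! (j - piece_start us' (piece_idx us' j))"
        using concat_nth_pidx[of j us'] lconc j by simp
      also have "us' ! piece_idx us' j = f q0"
        using nth' pj' by simp
      also have "piece_start us' (piece_idx us' j) = min (i + m) (max i (ps q0)) - i"
        using ps'[of "piece_idx us' j"] pj' by simp
      also have "f q0 ! (j - (min (i + m) (max i (ps q0)) - i)) = us ! q0 ! (i + j - ps q0)"
      proof -
        have lq: "length (us ! q0) = ps (Suc q0) - ps q0" using lus r0 by simp
        have e: "i - ps q0 + (j - (min (i + m) (max i (ps q0)) - i)) = i + j - ps q0"
          using r0 j by (auto simp: min_def max_def)
        have le: "i - ps q0 \<le> length (take (i + m - ps q0) (us ! q0))"
          using lq r0 j by (auto simp: min_def)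
        have "f q0 ! (j - (min (i + m) (max i (ps q0)) - i))
            = take (i + m - ps q0) (us ! q0) ! (i - ps q0 + (j - (min (i + m) (max i (ps q0)) - i)))"
          unfolding f_def using le by (rule nth_drop)
        also have "\<dots> = us ! q0 ! (i + j - ps q0)" unfolding e using r0 j by simp
        finally show ?thesis .
      qed
      also have "us ! q0 ! (i + j - ps q0) = concat us ! (i + j)"
        using concat_nth_pidx[of "i + j" us] im j unfolding q0_def ps_def by simp
      also have "\<dots> = take m (drop i (concat us)) ! j" using im j by simp
      finally show ?thesis .
    qed
    moreover have "length (take m (drop i (concat us))) = m" using im by simp
    ultimately show ?thesis unfolding d' using lconc by (simp add: nth_equalityI)
  qed
  show "\<forall>j<m. droot (induced_decomp (us, v) i m) j = droot (us,v) (i+j)"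
  proof (intro allI impI)
    fix j assume j: "j < m"
    have "v' ! piece_idx us' j = v ! (ka + piece_idx us' j)"
      unfolding v'_def using pj[OF j] lv rb ra by simp
    then show "droot (induced_decomp (us, v) i m) j = droot (us,v) (i+j)"
      unfolding d' droot_def using pj[OF j] by simp
  qed
  show "\<forall>j<m. dstart (fst (induced_decomp (us, v) i m)) j = (j = 0 \<or> dstart us (i+j))"
  proof (intro allI impI)
    fix j assume j: "j < m"
    show "dstart (fst (induced_decomp (us, v) i m)) j = (j = 0 \<or> dstart us (i+j))"
    proof
      assume "dstart (fst (induced_decomp (us, v) i m)) j"
      then obtain q where q: "q < length us'" "piece_start us' q = j"
        unfolding d' dstart_def by auto
      have "j = 0 \<or> ps (ka + q) = i + j"
        using ps'[of q] q lus' j by (auto simp: min_def max_def)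
      moreover have "ka + q < length us" using q lus' rb n'_def by simp
      ultimately show "j = 0 \<or> dstart us (i+j)" unfolding dstart_def ps_def by blast
    next
      assume "j = 0 \<or> dstart us (i+j)"
      then show "dstart (fst (induced_decomp (us, v) i m)) j"
      proof
        assume "j = 0" then show ?thesis unfolding d' dstart_def using lus' kab n'_def
          by (intro exI[of _ 0]) simp
      next
        assume ds: "dstart us (i + j)"
        have "piece_start us (piece_idx us (i + j)) = i + j"
          using dstart_iff[OF ne, of "i + j"] ds im j by simp
        moreover have "piece_idx us (i + j) = ka + piece_idx us' j" using pj[OF j] by simp
        ultimately have "ps (ka + piece_idx us' j) = i + j" unfolding ps_def by simp
        moreover have "piece_idx us' j < n'" using pj[OF j] by simp
        ultimately have "piece_start us' (piece_idx us' j) = j"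
          using ps'[of "piece_idx us' j"] j by (auto simp: min_def max_def)
        moreover have "piece_idx us' j < length us'" using pj[OF j] lus' by simp
        ultimately show ?thesis unfolding d' dstart_def by auto
      qed
    qed
  qed
qed


lemma legal_sublist: "legal \<theta> v \<Longrightarrow> sublist u v \<Longrightarrow> legal \<theta> u"
  unfolding legal_def by (meson sublist_order.order.trans)

lemma induced_eq_iff:
  assumes ne1: "nonempty_pieces us1" and ne2: "nonempty_pieces us2"
    and lv1: "length v1 = length us1" and lv2: "length v2 = length us2"
    and cc: "concat us1 = concat us2" and m: "0 < m" and im: "i + m \<le> length (concat us1)"
  shows "induced_decomp (us1,v1) i m = induced_decomp (us2,v2) i m \<longleftrightarrow>
    (\<forall>j<m. droot (us1,v1) (i+j) = droot (us2,v2) (i+j)) \<and>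
    (\<forall>j. 0 < j \<and> j < m \<longrightarrow> dstart us1 (i+j) = dstart us2 (i+j))"
proof -
  have im2: "i + m \<le> length (concat us2)" using im cc by simp
  note P1 = induced_props[OF ne1 lv1 m im] and P2 = induced_props[OF ne2 lv2 m im2]
  show ?thesis
  proof
    assume eq: "induced_decomp (us1,v1) i m = induced_decomp (us2,v2) i m"
    show "(\<forall>j<m. droot (us1,v1) (i+j) = droot (us2,v2) (i+j)) \<and>
      (\<forall>j. 0 < j \<and> j < m \<longrightarrow> dstart us1 (i+j) = dstart us2 (i+j))"
    proof (intro conjI allI impI)
      fix j assume "j < m"
      then show "droot (us1,v1) (i+j) = droot (us2,v2) (i+j)" using P1(4) P2(4) eq by metis
    next
      fix j assume "0 < j \<and> j < m"
      then show "dstart us1 (i+j) = dstart us2 (i+j)" using P1(5) P2(5) eq by (metis not_gr0)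
    qed
  next
    assume H: "(\<forall>j<m. droot (us1,v1) (i+j) = droot (us2,v2) (i+j)) \<and>
      (\<forall>j. 0 < j \<and> j < m \<longrightarrow> dstart us1 (i+j) = dstart us2 (i+j))"
    let ?d1 = "induced_decomp (us1,v1) i m" and ?d2 = "induced_decomp (us2,v2) i m"
    have "fst ?d1 = fst ?d2 \<and> snd ?d1 = snd ?d2"
    proof (rule det)
      show "nonempty_pieces (fst ?d1)" "nonempty_pieces (fst ?d2)"
        "length (snd ?d1) = length (fst ?d1)" "length (snd ?d2) = length (fst ?d2)"
        using P1 P2 by auto
      show "concat (fst ?d1) = concat (fst ?d2)" using P1(3) P2(3) cc by simp
      have l: "length (concat (fst ?d1)) = m" using P1(3) im by simp
      show "\<forall>j<length (concat (fst ?d1)). dstart (fst ?d1) j = dstart (fst ?d2) j \<and>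
          droot (fst ?d1, snd ?d1) j = droot (fst ?d2, snd ?d2) j"
        unfolding l using P1(4,5) P2(4,5) H by (metis not_gr0 prod.collapse)
    qed
    then show "?d1 = ?d2" by (simp add: prod_eq_iff)
  qed
qed

lemma induced_in_decomps:
  fixes us :: "'a list list" and v :: "'a list"
  assumes ne: "nonempty_pieces us" and lv: "length v = length us" and m: "0 < m"
    and im: "i + m \<le> length (concat us)"
    and full: "\<forall>q<length us. us ! q \<in> \<theta> (v ! q)" and lg: "legal \<theta> v"
    and two: "piece_idx us i < piece_idx us (i + m - 1)"
  shows "induced_decomp (us, v) i m \<in> infl_decomps \<theta> (take m (drop i (concat us)))"
proof -
  note P = induced_props[OF ne lv m im]
  define ps where "ps = piece_start us"
  define ka where "ka = piece_idx us i"
  define kb where "kb = piece_idx us (i + m - 1)"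
  define f where "f k = drop (i - ps k) (take (i + m - ps k) (us ! k))" for k
  define n' where "n' = Suc kb - ka"
  define us' where "us' = map (\<lambda>q. f (ka + q)) [0..<n']"
  define v' where "v' = take n' (drop ka v)"
  have "map f [ka..<Suc kb] = us'"
    unfolding us'_def by (rule nth_equalityI) (simp_all add: n'_def nth_upt del: upt_Suc)
  then have d': "induced_decomp (us, v) i m = (us', v')"
    unfolding induced_decomp_def Let_def v'_def f_def ps_def ka_def kb_def n'_def by simp
  have ra: "ka < length us" "ps ka \<le> i" "i < ps (Suc ka)"
    using pidx_range[of i us] im m unfolding ka_def ps_def by auto
  have rb: "kb < length us" "ps kb \<le> i + m - 1" "i + m - 1 < ps (Suc kb)"
    using pidx_range[of "i + m - 1" us] im m unfolding kb_def ps_def by auto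
  have kab: "ka < kb" using two unfolding ka_def kb_def .
  have lus: "length (us ! k) = ps (Suc k) - ps k" if "k < length us" for k
    using ps_Suc[OF that] unfolding ps_def by simp
  have psm: "ps k \<le> ps k'" if "k \<le> k'" for k k' unfolding ps_def using that by (rule ps_mono)
  have lus': "length us' = n'" unfolding us'_def by simp
  have nth': "us' ! q = f (ka + q)" if "q < n'" for q unfolding us'_def using that by simp
  have nthv: "v' ! q = v ! (ka + q)" if "q < n'" for q
    unfolding v'_def using that lv ra by simp
  have nodrop: "i - ps k = 0" if "Suc ka \<le> k" for k
    using psm[OF that] ra by simp
  have notake: "take (i + m - ps k) (us ! k) = us ! k" if "k < kb" for k
  proof -
    have "ps (Suc k) \<le> ps kb" using psm that by simp
    then show ?thesis using lus[of k] rb that by simp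
  qed
  have "(us', v') \<in> infl_decomps \<theta> (take m (drop i (concat us)))"
    unfolding infl_decomps_def
  proof (clarify, intro conjI)
    show "length us' = length v'" using P(2) d' by simp
    show "\<forall>p\<in>set us'. p \<noteq> []" using P(1) d' by (simp add: nonempty_pieces_def)
    show "concat us' = take m (drop i (concat us))" using P(3) d' by simp
    show "legal \<theta> v'" unfolding v'_def
      by (rule legal_sublist[OF lg]) (meson sublist_drop sublist_take sublist_order.order.trans)
    show "\<forall>q. 0 < q \<and> q + 1 < length us' \<longrightarrow> us' ! q \<in> \<theta> (v' ! q)"
    proof (intro allI impI)
      fix q assume q: "0 < q \<and> q + 1 < length us'"
      have k: "ka + q < kb" "Suc ka \<le> ka + q" "q < n'" using q lus' n'_def by auto
      then have "us' ! q = us ! (ka + q)" using nth'[of q] f_def nodrop[of "ka+q"] notake[of "ka+q"] by simp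
      moreover have "ka + q < length us" using k rb by simp
      ultimately show "us' ! q \<in> \<theta> (v' ! q)" using full nthv[of q] k by simp
    qed
    show "us' \<noteq> [] \<longrightarrow> (\<exists>t\<in>\<theta> (v' ! 0). suffix (us' ! 0) t) \<and>
        (\<exists>t\<in>\<theta> (v' ! (length v' - 1)). prefix (us' ! (length us' - 1)) t)"
    proof (intro impI conjI)
      have n2: "2 \<le> n'" using kab n'_def by simp
      have "us' ! 0 = drop (i - ps ka) (us ! ka)" using nth'[of 0] n2 f_def notake[OF kab] by simp
      moreover have "us ! ka \<in> \<theta> (v' ! 0)" using full ra nthv[of 0] n2 by simp
      ultimately show "\<exists>t\<in>\<theta> (v' ! 0). suffix (us' ! 0) t" using suffix_drop by metis
      have lv': "length v' = n'" using P(2) d' lus' by simp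
      have e: "ka + (n' - 1) = kb" using n'_def kab by simp
      have "us' ! (length us' - 1) = take (i + m - ps kb) (us ! kb)"
        using nth'[of "n' - 1"] n2 f_def nodrop[of kb] kab lus' e by simp
      moreover have "us ! kb \<in> \<theta> (v' ! (length v' - 1))" using full rb nthv[of "n' - 1"] n2 lv' e by simp
      ultimately show "\<exists>t\<in>\<theta> (v' ! (length v' - 1)). prefix (us' ! (length us' - 1)) t"
        using take_is_prefix by metis
    qed
  qed
  then show ?thesis using d' by simp
qed


type_synonym 'a lab = "'a \<times> 'a list \<times> nat"

definition lab_at :: "('a \<Rightarrow> 'a list set) \<Rightarrow> (int \<Rightarrow> 'a) \<Rightarrow> (int \<Rightarrow> 'a lab) \<Rightarrow> int \<Rightarrow> bool" where
  "lab_at \<theta> x l j \<longleftrightarrow> (case l j of (a, t, r) \<Rightarrow> t \<in> \<theta> a \<and> r < length t \<and> x j = t ! r)"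

definition step_at :: "(int \<Rightarrow> 'a lab) \<Rightarrow> int \<Rightarrow> bool" where
  "step_at l j \<longleftrightarrow> (case l j of (a, t, r) \<Rightarrow> case l (j + 1) of (a', t', r') \<Rightarrow>
      (a' = a \<and> t' = t \<and> r' = Suc r) \<or> (Suc r = length t \<and> r' = 0))"

definition rootw :: "(int \<Rightarrow> 'a lab) \<Rightarrow> int \<Rightarrow> nat \<Rightarrow> 'a list" where
  "rootw l p n = map (\<lambda>i. fst (l (p + int i))) (filter (\<lambda>i. i = 0 \<or> snd (snd (l (p + int i))) = 0) [0..<n])"

definition LabWin :: "('a \<Rightarrow> 'a list set) \<Rightarrow> (int \<Rightarrow> 'a) \<Rightarrow> (int \<Rightarrow> 'a lab) \<Rightarrow> int \<Rightarrow> nat \<Rightarrow> bool" where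
  "LabWin \<theta> x l p n \<longleftrightarrow> (\<forall>j. p \<le> j \<and> j < p + int n \<longrightarrow> lab_at \<theta> x l j) \<and>
     (\<forall>j. p \<le> j \<and> j + 1 < p + int n \<longrightarrow> step_at l j) \<and>
     (\<forall>q k. p \<le> q \<and> q + int k \<le> p + int n \<longrightarrow> legal \<theta> (rootw l q k))"

definition LabX :: "('a \<Rightarrow> 'a list set) \<Rightarrow> (int \<Rightarrow> 'a) \<Rightarrow> (int \<Rightarrow> 'a lab) \<Rightarrow> bool" where
  "LabX \<theta> x l \<longleftrightarrow> (\<forall>j. lab_at \<theta> x l j) \<and> (\<forall>j. step_at l j) \<and> (\<forall>q k. legal \<theta> (rootw l q k))"

lemma rootw_Suc: "rootw l p (Suc k) = rootw l p k @
   (if k = 0 \<or> snd (snd (l (p + int k))) = 0 then [fst (l (p + int k))] else [])"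
  unfolding rootw_def by simp

lemma rootw_0[simp]: "rootw l p 0 = []" unfolding rootw_def by simp

lemma rootw_cong:
  assumes "\<And>j. p \<le> j \<Longrightarrow> j < p + int k \<Longrightarrow> l j = l' j"
  shows "rootw l p k = rootw l' p k"
proof -
  have "filter (\<lambda>i. i = 0 \<or> snd (snd (l (p + int i))) = 0) [0..<k] =
        filter (\<lambda>i. i = 0 \<or> snd (snd (l' (p + int i))) = 0) [0..<k]"
    by (rule filter_cong) (auto simp: assms)
  then show ?thesis unfolding rootw_def by (auto intro!: map_cong simp: assms)
qed

lemma rootw_shift: "rootw (\<lambda>j. l (j + d)) p k = rootw l (p + d) k"
  unfolding rootw_def by (simp add: algebra_simps)

lemma LabWin_cong:
  assumes "LabWin \<theta> x l p n" "\<And>j. p \<le> j \<Longrightarrow> j < p + int n \<Longrightarrow> x j = x' j \<and> l j = l' j"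
  shows "LabWin \<theta> x' l' p n"
  unfolding LabWin_def
proof (intro conjI allI impI)
  fix j assume j: "p \<le> j \<and> j < p + int n"
  then have "lab_at \<theta> x l j" using assms(1) unfolding LabWin_def by blast
  then show "lab_at \<theta> x' l' j" using assms(2)[of j] j unfolding lab_at_def by auto
next
  fix j assume j: "p \<le> j \<and> j + 1 < p + int n"
  then have "step_at l j" using assms(1) unfolding LabWin_def by blast
  moreover have "l j = l' j" "l (j + 1) = l' (j + 1)" using assms(2)[of j] assms(2)[of "j+1"] j by auto
  ultimately show "step_at l' j" unfolding step_at_def by simp
next
  fix q k assume qk: "p \<le> q \<and> q + int k \<le> p + int n"
  then have "legal \<theta> (rootw l q k)" using assms(1) unfolding LabWin_def by blast
  moreover have "rootw l q k = rootw l' q k" using qk assms(2) by (intro rootw_cong) auto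
  ultimately show "legal \<theta> (rootw l' q k)" by simp
qed

lemma LabWin_mono:
  assumes "LabWin \<theta> x l p n" "p \<le> p'" "p' + int n' \<le> p + int n"
  shows "LabWin \<theta> x l p' n'"
  unfolding LabWin_def
proof (intro conjI allI impI)
  fix j assume j: "p' \<le> j \<and> j < p' + int n'"
  then have "p \<le> j \<and> j < p + int n" using assms(2,3) by linarith
  then show "lab_at \<theta> x l j" using assms(1) unfolding LabWin_def by blast
next
  fix j assume j: "p' \<le> j \<and> j + 1 < p' + int n'"
  then have "p \<le> j \<and> j + 1 < p + int n" using assms(2,3) by linarith
  then show "step_at l j" using assms(1) unfolding LabWin_def by blast
next
  fix q k assume qk: "p' \<le> q \<and> q + int k \<le> p' + int n'"
  then have "p \<le> q \<and> q + int k \<le> p + int n" using assms(2,3) by linarith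
  then show "legal \<theta> (rootw l q k)" using assms(1) unfolding LabWin_def by blast
qed

lemma LabWin_shift:
  assumes "LabWin \<theta> x l p n"
  shows "LabWin \<theta> (\<lambda>j. x (j + d)) (\<lambda>j. l (j + d)) (p - d) n"
  unfolding LabWin_def
proof (intro conjI allI impI)
  fix j assume j: "p - d \<le> j \<and> j < p - d + int n"
  then have "p \<le> j + d \<and> j + d < p + int n" by linarith
  then have "lab_at \<theta> x l (j + d)" using assms(1) unfolding LabWin_def by blast
  then show "lab_at \<theta> (\<lambda>j. x (j + d)) (\<lambda>j. l (j + d)) j" unfolding lab_at_def by simp
next
  fix j assume j: "p - d \<le> j \<and> j + 1 < p - d + int n"
  then have "p \<le> j + d \<and> j + d + 1 < p + int n" by linarith
  then have "step_at l (j + d)" using assms(1) unfolding LabWin_def by blast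
  then show "step_at (\<lambda>j. l (j + d)) j" unfolding step_at_def by (simp add: algebra_simps)
next
  fix q k assume qk: "p - d \<le> q \<and> q + int k \<le> p - d + int n"
  then have "p \<le> q + d \<and> q + d + int k \<le> p + int n" by linarith
  then have "legal \<theta> (rootw l (q + d) k)" using assms(1) unfolding LabWin_def by blast
  then show "legal \<theta> (rootw (\<lambda>j. l (j + d)) q k)" by (simp add: rootw_shift)
qed

lemma LabX_LabWin: "LabX \<theta> x l \<longleftrightarrow> (\<forall>p n. LabWin \<theta> x l p n)"
proof
  assume "LabX \<theta> x l" then show "\<forall>p n. LabWin \<theta> x l p n" unfolding LabX_def LabWin_def by blast
next
  assume H: "\<forall>p n. LabWin \<theta> x l p n"
  have "lab_at \<theta> x l j" for j using H[rule_format, of j 1] unfolding LabWin_def by simp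
  moreover have "step_at l j" for j using H[rule_format, of j 2] unfolding LabWin_def by simp
  moreover have "legal \<theta> (rootw l q k)" for q k using H[rule_format, of q k] unfolding LabWin_def by simp
  ultimately show "LabX \<theta> x l" unfolding LabX_def by blast
qed


definition dlab :: "'a list list \<Rightarrow> 'a list \<Rightarrow> (nat \<Rightarrow> 'a list) \<Rightarrow> (nat \<Rightarrow> nat) \<Rightarrow> int \<Rightarrow> 'a lab" where
  "dlab us v T E j = (let q = piece_idx us (nat j) in (v ! q, T q, nat j - piece_start us q + E q))"

lemma pidx_step:
  assumes ne: "nonempty_pieces us" and n: "0 < n" "n < length (concat us)"
  shows "(dstart us n \<longrightarrow> piece_idx us n = Suc (piece_idx us (n - 1))) \<and>
         (\<not> dstart us n \<longrightarrow> piece_idx us n = piece_idx us (n - 1))"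
proof -
  define q where "q = piece_idx us (n - 1)"
  have r: "q < length us" "piece_start us q \<le> n - 1" "n - 1 < piece_start us (Suc q)"
    using pidx_range[of "n - 1" us] n unfolding q_def by auto
  show ?thesis
  proof (cases "n < piece_start us (Suc q)")
    case True
    then have p: "piece_idx us n = q" using r by (intro pidx_eq) auto
    then have "\<not> dstart us n" using dstart_iff[OF ne n(2)] r n by auto
    then show ?thesis using p q_def by simp
  next
    case False
    then have e: "n = piece_start us (Suc q)" using r n by simp
    have sq: "Suc q < length us"
    proof (rule ccontr)
      assume "\<not> Suc q < length us"
      then have "piece_start us (Suc q) = length (concat us)" by (intro ps_ge_len) simp
      then show False using e n by simp
    qed
    have "n < piece_start us (Suc (Suc q))" using e ps_strict[OF ne, of "Suc q" "Suc (Suc q)"] sq by simp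
    then have p: "piece_idx us n = Suc q" using e by (intro pidx_eq) auto
    have "dstart us n" unfolding dstart_def using sq e by auto
    then show ?thesis using p q_def by simp
  qed
qed

lemma map_nth_upt_sublist: "b \<le> length v \<Longrightarrow> sublist (map (nth v) [a..<b]) v"
proof -
  assume b: "b \<le> length v"
  have "map (nth v) [a..<b] = take (b - a) (drop a v)"
    by (rule nth_equalityI) (use b in auto)
  then show ?thesis by (metis sublist_drop sublist_order.order.trans sublist_take)
qed

lemma dlab_props:
  fixes us :: "'a list list" and v :: "'a list"
  assumes ne: "nonempty_pieces us" and lv: "length v = length us"
    and H1: "\<forall>q<length us. T q \<in> \<theta> (v ! q)"
    and H2: "\<forall>q<length us. \<forall>i<length (us ! q). us ! q ! i = T q ! (i + E q)"
    and H2b: "\<forall>q<length us. E q + length (us ! q) \<le> length (T q)"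
    and H3: "\<forall>q. Suc q < length us \<longrightarrow> E q + length (us ! q) = length (T q)"
    and H4: "\<forall>q. 0 < q \<longrightarrow> E q = 0"
    and lg: "legal \<theta> v"
  shows "LabWin \<theta> (\<lambda>j. concat us ! nat j) (dlab us v T E) 0 (length (concat us))"
    "\<forall>j. 0 < j \<and> j < length (concat us) \<longrightarrow> (snd (snd (dlab us v T E (int j))) = 0 \<longleftrightarrow> dstart us j)"
    "\<forall>j<length (concat us). fst (dlab us v T E (int j)) = droot (us, v) j"
proof -
  let ?l = "dlab us v T E"
  let ?W = "length (concat us)"
  show I3: "\<forall>j<?W. fst (?l (int j)) = droot (us, v) j"
    by (simp add: dlab_def droot_def Let_def)
  show I2: "\<forall>j. 0 < j \<and> j < ?W \<longrightarrow> (snd (snd (?l (int j))) = 0 \<longleftrightarrow> dstart us j)"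
  proof (intro allI impI)
    fix j assume j: "0 < j \<and> j < ?W"
    define q where "q = piece_idx us j"
    have r: "q < length us" "piece_start us q \<le> j" "j < piece_start us (Suc q)"
      using pidx_range[of j us] j unfolding q_def by auto
    have ds: "dstart us j \<longleftrightarrow> piece_start us q = j" using dstart_iff[OF ne] j q_def by simp
    show "snd (snd (?l (int j))) = 0 \<longleftrightarrow> dstart us j"
    proof (cases "q = 0")
      case True
      then show ?thesis using ds j by (simp add: dlab_def Let_def q_def[symmetric])
    next
      case False
      then show ?thesis using ds r H4 by (auto simp: dlab_def Let_def q_def[symmetric])
    qed
  qed
  have G: "rootw ?l (int p) k = map (nth v) [piece_idx us p..<Suc (piece_idx us (p + k - 1))]"
    if "0 < k" "p + k \<le> ?W" for p k
    using that
  proof (induction k)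
    case 0 then show ?case by simp
  next
    case (Suc k)
    show ?case
    proof (cases "k = 0")
      case True
      then show ?thesis by (simp add: rootw_Suc dlab_def Let_def)
    next
      case False
      then have IH: "rootw ?l (int p) k = map (nth v) [piece_idx us p..<Suc (piece_idx us (p + k - 1))]"
        using Suc by simp
      have n: "0 < p + k" "p + k < ?W" using False Suc.prems by auto
      have mono: "piece_idx us p \<le> piece_idx us (p + k - 1)" using n False by (intro pidx_mono) auto
      have "snd (snd (?l (int p + int k))) = 0 \<longleftrightarrow> dstart us (p + k)"
        using I2 n by (metis of_nat_add)
      moreover have "fst (?l (int p + int k)) = v ! piece_idx us (p + k)"
        by (simp add: dlab_def Let_def nat_add_distrib)
      moreover note pidx_step[OF ne n]
      ultimately show ?thesis unfolding rootw_Suc IH using False mono by auto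
    qed
  qed
  show "LabWin \<theta> (\<lambda>j. concat us ! nat j) ?l 0 ?W"
    unfolding LabWin_def
  proof (intro conjI allI impI)
    fix j :: int assume j: "0 \<le> j \<and> j < 0 + int ?W"
    define n where "n = nat j"
    have n: "n < ?W" "j = int n" using j unfolding n_def by auto
    define q where "q = piece_idx us n"
    have r: "q < length us" "piece_start us q \<le> n" "n < piece_start us (Suc q)"
      using pidx_range[of n us] n unfolding q_def by auto
    have li: "n - piece_start us q < length (us ! q)" using r ps_Suc[OF r(1)] by simp
    have "concat us ! n = us ! q ! (n - piece_start us q)"
      using concat_nth_pidx[OF n(1)] unfolding q_def by simp
    also have "\<dots> = T q ! (n - piece_start us q + E q)" using H2[rule_format, OF r(1) li] .
    finally have e1: "concat us ! n = T q ! (n - piece_start us q + E q)" .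
    have e2: "n - piece_start us q + E q < length (T q)" using H2b[rule_format, OF r(1)] li by linarith
    have e3: "?l j = (v ! q, T q, n - piece_start us q + E q)"
      unfolding dlab_def Let_def q_def n_def by simp
    show "lab_at \<theta> (\<lambda>j. concat us ! nat j) ?l j"
      unfolding lab_at_def e3 using H1[rule_format, OF r(1)] e1 e2 n_def by simp
  next
    fix j :: int assume j: "0 \<le> j \<and> j + 1 < 0 + int ?W"
    define n where "n = nat j"
    have n: "Suc n < ?W" "j = int n" using j unfolding n_def by auto
    define q where "q = piece_idx us n"
    have r: "q < length us" "piece_start us q \<le> n" "n < piece_start us (Suc q)"
      using pidx_range[of n us] n unfolding q_def by auto
    have nj: "nat (j + 1) = Suc n" using n by simp
    have e0: "?l j = (v ! q, T q, n - piece_start us q + E q)"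
      unfolding dlab_def Let_def q_def n_def by simp
    show "step_at ?l j"
    proof (cases "Suc n < piece_start us (Suc q)")
      case True
      then have p: "piece_idx us (Suc n) = q" using r by (intro pidx_eq) auto
      have e1: "?l (j + 1) = (v ! q, T q, Suc n - piece_start us q + E q)"
        unfolding dlab_def Let_def nj p by simp
      have "Suc n - piece_start us q + E q = Suc (n - piece_start us q + E q)" using r by linarith
      then show ?thesis unfolding step_at_def e0 e1 by simp
    next
      case False
      then have e: "Suc n = piece_start us (Suc q)" using r by simp
      have sq: "Suc q < length us"
      proof (rule ccontr)
        assume "\<not> Suc q < length us"
        then have "piece_start us (Suc q) = ?W" by (intro ps_ge_len) simp
        then show False using e n by simp
      qed
      have "Suc n < piece_start us (Suc (Suc q))" using e ps_strict[OF ne, of "Suc q" "Suc (Suc q)"] sq by simp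
      then have p: "piece_idx us (Suc n) = Suc q" using e by (intro pidx_eq) auto
      have E0: "E (Suc q) = 0" using H4 by simp
      have e1: "?l (j + 1) = (v ! Suc q, T (Suc q), 0)"
        unfolding dlab_def Let_def nj p using e E0 by simp
      have "E q + length (us ! q) = length (T q)" using H3[rule_format, OF sq] .
      moreover have "piece_start us (Suc q) = piece_start us q + length (us ! q)" using ps_Suc[OF r(1)] .
      ultimately have "Suc (n - piece_start us q + E q) = length (T q)" using e r by linarith
      then show ?thesis unfolding step_at_def e0 e1 by simp
    qed
  next
    fix q :: int and k assume qk: "0 \<le> q \<and> q + int k \<le> 0 + int ?W"
    show "legal \<theta> (rootw ?l q k)"
    proof (cases "k = 0")
      case True
      then show ?thesis using legal_sublist[OF lg] by simp
    next
      case False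
      define p where "p = nat q"
      have p: "q = int p" "p + k \<le> ?W" using qk unfolding p_def by auto
      have "piece_idx us (p + k - 1) < length us" using pidx_range[of "p + k - 1" us] p False by simp
      moreover have "rootw ?l q k = map (nth v) [piece_idx us p..<Suc (piece_idx us (p + k - 1))]"
        unfolding p(1) using G[OF _ p(2)] False by simp
      ultimately have "sublist (rootw ?l q k) v" using lv
        by (metis map_nth_upt_sublist Suc_leI)
      then show ?thesis by (rule legal_sublist[OF lg])
    qed
  qed
qed


definition maxlen :: "('a \<Rightarrow> 'a list set) \<Rightarrow> nat" where
  "maxlen \<theta> = Max (length ` (\<Union>a. \<theta> a))"

lemma maxlen_ge:
  fixes \<theta> :: "'a::finite \<Rightarrow> 'a list set"
  assumes "random_subst \<theta>" "t \<in> \<theta> a"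
  shows "length t \<le> maxlen \<theta>"
proof -
  have "finite (\<Union>a. \<theta> a)" using assms(1) unfolding random_subst_def by simp
  then show ?thesis unfolding maxlen_def using assms(2) by (intro Max_ge) auto
qed

lemma rs_nonempty: "random_subst \<theta> \<Longrightarrow> t \<in> \<theta> a \<Longrightarrow> t \<noteq> []"
  unfolding random_subst_def by blast

lemma maxlen_pos:
  fixes \<theta> :: "'a::finite \<Rightarrow> 'a list set"
  assumes "random_subst \<theta>"
  shows "0 < maxlen \<theta>"
proof -
  obtain a :: 'a where True by simp
  obtain t where t: "t \<in> \<theta> a" using assms unfolding random_subst_def by blast
  then have "t \<noteq> []" using rs_nonempty[OF assms] by blast
  then show ?thesis using maxlen_ge[OF assms t] by (cases t) auto
qed

lemma full_lab:
  assumes rs: "random_subst \<theta>" and lv: "length v = length us"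
    and full: "\<forall>q<length us. us ! q \<in> \<theta> (v ! q)" and lg: "legal \<theta> v"
  shows "\<exists>l. LabWin \<theta> (\<lambda>j. concat us ! nat j) l 0 (length (concat us))"
proof -
  have ne: "nonempty_pieces us" unfolding nonempty_pieces_def
    using full rs_nonempty[OF rs] by (metis in_set_conv_nth)
  have "LabWin \<theta> (\<lambda>j. concat us ! nat j) (dlab us v (\<lambda>q. us ! q) (\<lambda>q. 0)) 0 (length (concat us))"
    by (rule dlab_props(1)[OF ne lv]) (use full lg in auto)
  then show ?thesis by blast
qed

lemma decomp_lab:
  assumes d: "(us, v) \<in> infl_decomps \<theta> w" and two: "2 \<le> length us"
  shows "\<exists>l. LabWin \<theta> (\<lambda>j. w ! nat j) l 0 (length w) \<and>
     (\<forall>j. 0 < j \<and> j < length w \<longrightarrow> (snd (snd (l (int j))) = 0 \<longleftrightarrow> dstart us j)) \<and>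
     (\<forall>j<length w. fst (l (int j)) = droot (us, v) j)"
proof -
  have D: "length us = length v" "\<forall>p\<in>set us. p \<noteq> []" "concat us = w" "legal \<theta> v"
    "\<forall>i. 0 < i \<and> i + 1 < length us \<longrightarrow> us ! i \<in> \<theta> (v ! i)"
    "(\<exists>t\<in>\<theta> (v ! 0). suffix (us ! 0) t)"
    "(\<exists>t\<in>\<theta> (v ! (length v - 1)). prefix (us ! (length us - 1)) t)"
    using d two unfolding infl_decomps_def by auto
  obtain t1 where t1: "t1 \<in> \<theta> (v ! 0)" "suffix (us ! 0) t1" using D(6) by blast
  obtain t2 where t2: "t2 \<in> \<theta> (v ! (length us - 1))" "prefix (us ! (length us - 1)) t2"
    using D(7) D(1) by auto
  obtain pre where pre: "t1 = pre @ us ! 0" using t1(2) unfolding suffix_def by blast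
  obtain suf where suf: "t2 = us ! (length us - 1) @ suf" using t2(2) unfolding prefix_def by blast
  define L where "L = length us - 1"
  define T where "T (q::nat) = (if q = 0 then t1 else if q = L then t2 else us ! q)" for q
  define E where "E (q::nat) = (if q = 0 then length pre else 0)" for q
  have L0: "0 < L" using two L_def by simp
  have ne: "nonempty_pieces us" using D(2) unfolding nonempty_pieces_def .
  have lv: "length v = length us" using D(1) by simp
  note P = dlab_props[OF ne lv, of T \<theta> E]
  have H1: "\<forall>q<length us. T q \<in> \<theta> (v ! q)"
  proof (intro allI impI)
    fix q assume q: "q < length us"
    show "T q \<in> \<theta> (v ! q)"
    proof (cases "q = 0")
      case True then show ?thesis using t1 T_def by simp
    next
      case False
      show ?thesis
      proof (cases "q = L")
        case True then show ?thesis using t2 T_def L_def False by simp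
      next
        case False2: False
        then show ?thesis using D(5) q False T_def L_def by auto
      qed
    qed
  qed
  have H2: "\<forall>q<length us. \<forall>i<length (us ! q). us ! q ! i = T q ! (i + E q)"
    using pre suf L0 by (auto simp: T_def E_def L_def nth_append)
  have H2b: "\<forall>q<length us. E q + length (us ! q) \<le> length (T q)"
    using pre suf L0 by (auto simp: T_def E_def L_def)
  have H3: "\<forall>q. Suc q < length us \<longrightarrow> E q + length (us ! q) = length (T q)"
    using pre suf L0 by (auto simp: T_def E_def L_def)
  have H4: "\<forall>q. 0 < q \<longrightarrow> E q = 0" by (simp add: E_def)
  show ?thesis using P[OF H1 H2 H2b H3 H4 D(4)] D(3) by blast
qed

lemma legal_word_lab:
  fixes \<theta> :: "'a::finite \<Rightarrow> 'a list set"
  assumes rs: "random_subst \<theta>" and lg: "legal \<theta> W" and two: "2 \<le> length W"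
  shows "\<exists>l. LabWin \<theta> (\<lambda>j. W ! nat j) l 0 (length W)"
proof -
  obtain p a z where z: "z \<in> subst_pow \<theta> p [a]" "sublist W z" using lg unfolding legal_def by blast
  show ?thesis
  proof (cases p)
    case 0
    then have "z = [a]" using z by simp
    then have "length W \<le> 1" using z(2) sublist_length_le by fastforce
    then show ?thesis using two by simp
  next
    case (Suc p')
    then obtain v where v: "v \<in> subst_pow \<theta> p' [a]" "z \<in> subst_word \<theta> v" using z by auto
    have lgv: "legal \<theta> v" unfolding legal_def using v(1) by blast
    obtain us where us: "z = concat us" "list_all2 (\<lambda>u a. u \<in> \<theta> a) us v"
      using v(2) unfolding subst_word_def by blast
    have lv: "length v = length us" using us(2) list_all2_lengthD by metis
    have full: "\<forall>q<length us. us ! q \<in> \<theta> (v ! q)" using us(2) list_all2_nthD by blast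
    obtain l where l: "LabWin \<theta> (\<lambda>j. z ! nat j) l 0 (length z)"
      using full_lab[OF rs lv full lgv] us(1) by blast
    obtain pr sf where psf: "z = pr @ W @ sf" using z(2) unfolding sublist_def by blast
    have "LabWin \<theta> (\<lambda>j. z ! nat j) l (int (length pr)) (length W)"
      by (rule LabWin_mono[OF l]) (use psf in auto)
    then have "LabWin \<theta> (\<lambda>j. z ! nat (j + int (length pr))) (\<lambda>j. l (j + int (length pr))) 0 (length W)"
      using LabWin_shift[of \<theta> "\<lambda>j. z ! nat j" l "int (length pr)" "length W" "int (length pr)"] by simp
    then have "LabWin \<theta> (\<lambda>j. W ! nat j) (\<lambda>j. l (j + int (length pr))) 0 (length W)"
    proof (rule LabWin_cong)
      fix j :: int assume j: "0 \<le> j" "j < 0 + int (length W)"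
      then have "nat j < length W" by (simp add: nat_less_iff)
      then show "z ! nat (j + int (length pr)) = W ! nat j \<and> l (j + int (length pr)) = l (j + int (length pr))"
        using psf j by (simp add: nth_append nat_add_distrib)
    qed
    then show ?thesis by blast
  qed
qed


lemma infinite_nat_ge: "infinite (S :: nat set) \<Longrightarrow> \<exists>n\<in>S. m \<le> n"
  by (meson finite_lessThan finite_subset not_le subsetI lessThan_iff)

lemma konig:
  fixes F :: "nat \<Rightarrow> int \<Rightarrow> 'b"
  assumes fin: "finite B" and inB: "\<forall>n j. F n j \<in> B"
  shows "\<exists>g. \<forall>m. \<exists>n\<ge>m. \<forall>j. \<bar>j\<bar> \<le> int m \<longrightarrow> F n j = g j"
proof -
  define r where "r n m = map (\<lambda>i. F n (int i - int m)) [0..<2*m+1]" for n m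
  define P where "P m A \<longleftrightarrow> infinite A \<and> (\<forall>n\<in>A. \<forall>n'\<in>A. r n m = r n' m)" for m and A :: "nat set"
  have step: "\<exists>A'. A' \<subseteq> A \<and> P m A'" if A: "infinite A" for m A
  proof -
    have "r n m \<in> {xs. set xs \<subseteq> B \<and> length xs = 2*m+1}" for n
      using inB unfolding r_def by auto
    then have sub: "(\<lambda>n. r n m) ` A \<subseteq> {xs. set xs \<subseteq> B \<and> length xs = 2*m+1}" by blast
    have "finite ((\<lambda>n. r n m) ` A)"
      by (rule finite_subset[OF sub finite_lists_length_eq[OF fin]])
    then obtain a0 where "a0 \<in> A" "infinite {a\<in>A. r a m = r a0 m}"
      using pigeonhole_infinite[OF A] by blast
    then show ?thesis unfolding P_def by (intro exI[of _ "{a\<in>A. r a m = r a0 m}"]) auto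
  qed
  define S where "S = rec_nat (SOME A. P 0 A) (\<lambda>m Sm. SOME A. A \<subseteq> Sm \<and> P (Suc m) A)"
  have S0: "S 0 = (SOME A. P 0 A)" unfolding S_def by simp
  have SS: "S (Suc m) = (SOME A. A \<subseteq> S m \<and> P (Suc m) A)" for m unfolding S_def by simp
  have PS: "P m (S m)" for m
  proof (induction m)
    case 0
    have "\<exists>A. P 0 A" using step[of UNIV 0] by auto
    then show ?case unfolding S0 by (rule someI_ex)
  next
    case (Suc m)
    then have "infinite (S m)" unfolding P_def by simp
    then have "\<exists>A. A \<subseteq> S m \<and> P (Suc m) A" using step by blast
    then show ?case unfolding SS by (metis (mono_tags, lifting) someI_ex)
  qed
  have Ssub: "S (Suc m) \<subseteq> S m" for m
  proof -
    have "infinite (S m)" using PS unfolding P_def by simp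
    then have "\<exists>A. A \<subseteq> S m \<and> P (Suc m) A" using step by blast
    then show ?thesis unfolding SS by (metis (mono_tags, lifting) someI_ex)
  qed
  have Smono: "S m \<subseteq> S k" if "k \<le> m" for k m
    using that by (rule lift_Suc_antimono_le[of S, OF Ssub])
  have agree: "F n j = F n' j" if "n \<in> S m" "n' \<in> S m" "\<bar>j\<bar> \<le> int m" for n n' m j
  proof -
    have e: "r n m = r n' m" using PS[of m] that unfolding P_def by blast
    define i where "i = nat (j + int m)"
    have i: "i < 2*m+1" "int i - int m = j" using that(3) unfolding i_def by auto
    have "r n m ! i = r n' m ! i" using e by simp
    moreover have "r k m ! i = F k j" for k unfolding r_def using i by (simp del: upt_Suc)
    ultimately show ?thesis by simp
  qed
  define pick where "pick m = (SOME n. n \<in> S m)" for m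
  have pickS: "pick m \<in> S m" for m
  proof -
    have "infinite (S m)" using PS unfolding P_def by simp
    then have "S m \<noteq> {}" by auto
    then show ?thesis unfolding pick_def by (simp add: some_in_eq)
  qed
  define g where "g j = F (pick (nat \<bar>j\<bar>)) j" for j
  have "\<exists>n\<ge>m. \<forall>j. \<bar>j\<bar> \<le> int m \<longrightarrow> F n j = g j" for m
  proof -
    have "infinite (S m)" using PS unfolding P_def by simp
    then obtain n where n: "n \<in> S m" "m \<le> n" using infinite_nat_ge by blast
    have "F n j = g j" if j: "\<bar>j\<bar> \<le> int m" for j
    proof -
      have "S m \<subseteq> S (nat \<bar>j\<bar>)" using j by (intro Smono) linarith
      then show ?thesis unfolding g_def using agree[of n "nat \<bar>j\<bar>" "pick (nat \<bar>j\<bar>)" j] n pickS by auto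
    qed
    then show ?thesis using n by blast
  qed
  then show ?thesis by blast
qed


lemma lab_limit:
  assumes H: "\<forall>M. \<exists>x' l'. (\<forall>j. \<bar>j\<bar> \<le> int M \<longrightarrow> x' j = x j \<and> l' j = l j) \<and> LabWin \<theta> x' l' (- int M) (2*M+1)"
  shows "LabX \<theta> x l"
  unfolding LabX_LabWin
proof (intro allI)
  fix p n
  define M where "M = nat \<bar>p\<bar> + n + 1"
  obtain x' l' where xl: "\<forall>j. \<bar>j\<bar> \<le> int M \<longrightarrow> x' j = x j \<and> l' j = l j"
    "LabWin \<theta> x' l' (- int M) (2*M+1)" using H by blast
  have "LabWin \<theta> x' l' p n" by (rule LabWin_mono[OF xl(2)]) (simp_all add: M_def)
  then show "LabWin \<theta> x l p n"
    by (rule LabWin_cong) (use xl(1) M_def in auto)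
qed

definition tiling :: "('a \<Rightarrow> 'a list set) \<Rightarrow> (int \<Rightarrow> 'a) \<Rightarrow> (int \<Rightarrow> 'a) \<Rightarrow> (int \<Rightarrow> 'a list) \<Rightarrow> (int \<Rightarrow> int) \<Rightarrow> bool" where
  "tiling \<theta> x y w c \<longleftrightarrow> (\<forall>i. w i \<in> \<theta> (y i)) \<and> (\<forall>i. c (i + 1) = c i + int (length (w i))) \<and>
     (\<forall>i k. k < length (w i) \<longrightarrow> x (c i + int k) = w i ! k)"

context
  fixes \<theta> :: "'a \<Rightarrow> 'a list set" and x :: "int \<Rightarrow> 'a" and l :: "int \<Rightarrow> 'a lab"
  assumes LX: "LabX \<theta> x l"
begin

private abbreviation "A j \<equiv> fst (l j)"
private abbreviation "Tt j \<equiv> fst (snd (l j))"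
private abbreviation "R j \<equiv> snd (snd (l j))"

private lemma labj: "Tt j \<in> \<theta> (A j) \<and> R j < length (Tt j) \<and> x j = Tt j ! R j"
proof -
  have "lab_at \<theta> x l j" using LX unfolding LabX_def by blast
  then show ?thesis unfolding lab_at_def by (cases "l j") auto
qed

private lemma lenpos: "0 < length (Tt j)"
proof -
  have "R j < length (Tt j)" using labj by blast
  then show ?thesis by linarith
qed

private lemma stepj: "(A (j+1) = A j \<and> Tt (j+1) = Tt j \<and> R (j+1) = Suc (R j)) \<or>
    (Suc (R j) = length (Tt j) \<and> R (j+1) = 0)"
proof -
  have "step_at l j" using LX unfolding LabX_def by blast
  then show ?thesis unfolding step_at_def by (cases "l j"; cases "l (j + 1)") auto
qed

private lemma fwd: "R s = 0 \<Longrightarrow> i < length (Tt s) \<Longrightarrow> l (s + int i) = (A s, Tt s, i)"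
proof (induction i)
  case 0 then show ?case by (simp add: prod_eq_iff)
next
  case (Suc i)
  then have IH: "l (s + int i) = (A s, Tt s, i)" by simp
  have "(A (s + int i + 1) = A s \<and> Tt (s + int i + 1) = Tt s \<and> R (s + int i + 1) = Suc i) \<or>
    (Suc i = length (Tt s) \<and> R (s + int i + 1) = 0)" using stepj[of "s + int i"] IH by simp
  moreover have e: "s + int (Suc i) = s + int i + 1" by simp
  ultimately show ?case using Suc.prems unfolding e by (auto simp: prod_eq_iff)
qed

private lemma nxt_start: "R s = 0 \<Longrightarrow> R (s + int (length (Tt s))) = 0"
proof -
  assume s: "R s = 0"
  have pos: "0 < length (Tt s)" by (rule lenpos)
  define e where "e = s + int (length (Tt s) - 1)"
  have le: "l e = (A s, Tt s, length (Tt s) - 1)" unfolding e_def using fwd[OF s] pos by simp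
  have "int (length (Tt s) - 1) = int (length (Tt s)) - 1" using pos by (cases "length (Tt s)") auto
  then have e1: "e + 1 = s + int (length (Tt s))" unfolding e_def by simp
  have "R (e + 1) < length (Tt (e + 1))" using labj by blast
  then have "\<not> (Tt (e+1) = Tt e \<and> R (e+1) = Suc (R e))" using le pos by auto
  then show ?thesis using stepj[of e] e1 by auto
qed

private lemma bwd: "i \<le> R j \<Longrightarrow> l (j - int i) = (A j, Tt j, R j - i)"
proof (induction i)
  case 0 then show ?case by (simp add: prod_eq_iff)
next
  case (Suc i)
  then have IH: "l (j - int i) = (A j, Tt j, R j - i)" by simp
  have e: "j - int (Suc i) + 1 = j - int i" by simp
  have "(A (j - int i) = A (j - int (Suc i)) \<and> Tt (j - int i) = Tt (j - int (Suc i)) \<and>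
        R (j - int i) = Suc (R (j - int (Suc i)))) \<or>
    (Suc (R (j - int (Suc i))) = length (Tt (j - int (Suc i))) \<and> R (j - int i) = 0)"
    using stepj[of "j - int (Suc i)"] unfolding e .
  then show ?case using IH Suc.prems by (auto simp: prod_eq_iff)
qed

private lemma start_of: "R (j - int (R j)) = 0 \<and> A (j - int (R j)) = A j \<and> Tt (j - int (R j)) = Tt j"
  using bwd[of "R j" j] by simp

private lemma prv_start: "R s = 0 \<Longrightarrow> R (s - int (length (Tt (s - 1)))) = 0 \<and>
    (s - int (length (Tt (s - 1)))) + int (length (Tt (s - int (length (Tt (s - 1)))))) = s"
proof -
  assume s: "R s = 0"
  have e: "s - 1 + 1 = s" by simp
  have "Suc (R (s - 1)) = length (Tt (s - 1))" using stepj[of "s - 1"] s unfolding e by auto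
  then have q: "s - int (length (Tt (s - 1))) = s - 1 - int (R (s - 1))" by (metis of_nat_Suc diff_diff_eq add.commute)
  have st: "R (s - 1 - int (R (s - 1))) = 0 \<and> Tt (s - 1 - int (R (s - 1))) = Tt (s - 1)"
    using start_of by blast
  show ?thesis unfolding q using st q by simp
qed

definition "nxt j = j + int (length (Tt j))"
definition "prv j = j - int (length (Tt (j - 1)))"
definition "cs i = (if 0 \<le> i then (nxt ^^ nat i) (- int (R 0)) else (prv ^^ nat (- i)) (- int (R 0)))"

lemma cs_start: "R (cs i) = 0"
proof -
  have s0: "R (- int (R 0)) = 0" using start_of[of 0] by simp
  have "R ((nxt ^^ n) (- int (R 0))) = 0" for n
    by (induction n) (use s0 nxt_start in \<open>auto simp: nxt_def\<close>)
  moreover have "R ((prv ^^ n) (- int (R 0))) = 0" for n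
    by (induction n) (use s0 prv_start in \<open>auto simp: prv_def\<close>)
  ultimately show ?thesis unfolding cs_def by simp
qed

lemma cs_Suc: "cs (i + 1) = cs i + int (length (Tt (cs i)))"
proof (cases "0 \<le> i")
  case True
  then have "nat (i + 1) = Suc (nat i)" by simp
  then show ?thesis using True unfolding cs_def by (simp add: nxt_def)
next
  case False
  have "cs i = prv (cs (i + 1))"
  proof (cases "i + 1 = 0")
    case True
    then have "i = -1" by simp
    then show ?thesis unfolding cs_def by simp
  next
    case False2: False
    then have "nat (- i) = Suc (nat (- (i + 1)))" using False by simp
    then show ?thesis unfolding cs_def using False False2 by simp
  qed
  then show ?thesis using prv_start[OF cs_start[of "i + 1"]] unfolding prv_def by simp
qed

lemma cs_0: "cs 0 = - int (R 0)" unfolding cs_def by simp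

lemma cs_tiling: "tiling \<theta> x (\<lambda>i. A (cs i)) (\<lambda>i. Tt (cs i)) cs"
  unfolding tiling_def
proof (intro conjI allI impI)
  fix i show "Tt (cs i) \<in> \<theta> (A (cs i))" using labj by blast
next
  fix i show "cs (i + 1) = cs i + int (length (Tt (cs i)))" by (rule cs_Suc)
next
  fix i k assume k: "k < length (Tt (cs i))"
  then have "l (cs i + int k) = (A (cs i), Tt (cs i), k)" using fwd cs_start by blast
  then show "x (cs i + int k) = Tt (cs i) ! k" using labj[of "cs i + int k"] by simp
qed

lemma rootw_piece:
  assumes "R (p + int D) = 0" "\<forall>i. 0 < i \<and> i < L \<longrightarrow> R (p + int D + int i) \<noteq> 0" "k \<le> L"
  shows "rootw l p (D + k) = rootw l p D @ (if k = 0 then [] else [A (p + int D)])"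
  using assms(3)
proof (induction k)
  case 0 then show ?case by simp
next
  case (Suc k)
  then have IH: "rootw l p (D + k) = rootw l p D @ (if k = 0 then [] else [A (p + int D)])" by simp
  show ?case
  proof (cases "k = 0")
    case True
    then show ?thesis using assms(1) by (simp add: rootw_Suc)
  next
    case False
    then have "R (p + int (D + k)) \<noteq> 0" using assms(2) Suc.prems by (simp add: add.assoc)
    then show ?thesis using IH False by (simp add: rootw_Suc)
  qed
qed

lemma cs_mono: "cs i \<le> cs (i + int n)"
proof (induction n)
  case 0 then show ?case by simp
next
  case (Suc n)
  have "cs (i + int n + 1) = cs (i + int n) + int (length (Tt (cs (i + int n))))" by (rule cs_Suc)
  moreover have e: "i + int (Suc n) = i + int n + 1" by simp
  ultimately show ?case using Suc unfolding e by simp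
qed

lemma seq_word_rootw: "seq_word (\<lambda>i. A (cs i)) i n = rootw l (cs i) (nat (cs (i + int n) - cs i))"
proof (induction n)
  case 0 then show ?case by (simp add: seq_word_def)
next
  case (Suc n)
  define D where "D = nat (cs (i + int n) - cs i)"
  define L where "L = length (Tt (cs (i + int n)))"
  have cD: "cs i + int D = cs (i + int n)" unfolding D_def using cs_mono[of i n] by simp
  have e: "i + int (Suc n) = i + int n + 1" by simp
  have cS: "cs (i + int (Suc n)) = cs (i + int n) + int L"
    using cs_Suc[of "i + int n"] unfolding L_def e by simp
  have nS: "nat (cs (i + int (Suc n)) - cs i) = D + L" using cS cD by simp
  have L0: "0 < L" unfolding L_def by (rule lenpos)
  have nz: "\<forall>k. 0 < k \<and> k < L \<longrightarrow> R (cs i + int D + int k) \<noteq> 0"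
  proof (intro allI impI)
    fix k assume k: "0 < k \<and> k < L"
    then have "l (cs (i + int n) + int k) = (A (cs (i + int n)), Tt (cs (i + int n)), k)"
      using fwd[OF cs_start] unfolding L_def by blast
    then show "R (cs i + int D + int k) \<noteq> 0" using k cD by simp
  qed
  have "rootw l (cs i) (D + L) = rootw l (cs i) D @ [A (cs i + int D)]"
    using rootw_piece[of "cs i" D L L] cs_start[of "i + int n"] cD nz L0 by simp
  moreover have "seq_word (\<lambda>i. A (cs i)) i (Suc n) = seq_word (\<lambda>i. A (cs i)) i n @ [A (cs (i + int n))]"
    by (simp add: seq_word_def)
  ultimately show ?case using Suc nS cD D_def by simp
qed

lemma cs_subshift: "(\<lambda>i. A (cs i)) \<in> subshift \<theta>"
  unfolding subshift_def using seq_word_rootw LX unfolding LabX_def by auto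

lemma lab_tiling: "\<exists>y w c. tiling \<theta> x y w c \<and> c 0 = - int (R 0) \<and> y 0 = A 0 \<and> w 0 = Tt 0 \<and> y \<in> subshift \<theta>"
  using cs_tiling cs_0 start_of[of 0] cs_subshift by (intro exI[of _ "\<lambda>i. A (cs i)"] exI[of _ "\<lambda>i. Tt (cs i)"] exI[of _ cs]) simp

end


lemma seq_word_length[simp]: "length (seq_word x s n) = n" by (simp add: seq_word_def)

lemma seq_word_nth[simp]: "k < n \<Longrightarrow> seq_word x s n ! k = x (s + int k)" by (simp add: seq_word_def)

lemma seq_word_sub: "a + n \<le> N \<Longrightarrow> take n (drop a (seq_word x s N)) = seq_word x (s + int a) n"
  by (rule nth_equalityI) (auto simp: algebra_simps)

lemma seq_word_append: "seq_word x s (a + b) = seq_word x s a @ seq_word x (s + int a) b"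
  by (rule nth_equalityI) (auto simp: nth_append algebra_simps)

lemma seq_word_legal: "y \<in> subshift \<theta> \<Longrightarrow> legal \<theta> (seq_word y i n)"
  unfolding subshift_def by blast

lemma infl_decomps_basic: "d \<in> infl_decomps \<theta> u \<Longrightarrow>
   nonempty_pieces (fst d) \<and> length (snd d) = length (fst d) \<and> concat (fst d) = u"
  unfolding infl_decomps_def nonempty_pieces_def by auto

definition tidx :: "(int \<Rightarrow> int) \<Rightarrow> int \<Rightarrow> int" where
  "tidx c j = (THE t. c t \<le> j \<and> j < c (t + 1))"

context
  fixes \<theta> :: "'a::finite \<Rightarrow> 'a list set" and x y w c
  assumes rs: "random_subst \<theta>" and T: "tiling \<theta> x y w c"
begin

lemma til_w: "w i \<in> \<theta> (y i)" using T unfolding tiling_def by blast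
lemma til_c: "c (i + 1) = c i + int (length (w i))" using T unfolding tiling_def by blast
lemma til_x: "k < length (w i) \<Longrightarrow> x (c i + int k) = w i ! k" using T unfolding tiling_def by blast
lemma til_pos: "0 < length (w i)" using rs_nonempty[OF rs til_w] by simp
lemma til_le: "length (w i) \<le> maxlen \<theta>" using maxlen_ge[OF rs til_w] .

lemma til_grow: "c i + int n \<le> c (i + int n)"
proof (induction n)
  case 0 then show ?case by simp
next
  case (Suc n)
  have e: "i + int (Suc n) = i + int n + 1" by simp
  have "c (i + int (Suc n)) = c (i + int n) + int (length (w (i + int n)))" unfolding e by (rule til_c)
  moreover have "0 < length (w (i + int n))" by (rule til_pos)
  moreover have "int (Suc n) = int n + 1" by simp
  ultimately show ?case using Suc by linarith
qed

lemma til_mono: "i \<le> i' \<Longrightarrow> c i \<le> c i'"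
  using til_grow[of i "nat (i' - i)"] by simp

lemma til_strict: "i < i' \<Longrightarrow> c i < c i'"
  using til_grow[of i "nat (i' - i)"] by simp

lemma tidx_unique: "c t \<le> j \<Longrightarrow> j < c (t + 1) \<Longrightarrow> c t' \<le> j \<Longrightarrow> j < c (t' + 1) \<Longrightarrow> t = t'"
proof (rule ccontr)
  assume a: "c t \<le> j" "j < c (t + 1)" "c t' \<le> j" "j < c (t' + 1)" "t \<noteq> t'"
  then consider "t + 1 \<le> t'" | "t' + 1 \<le> t" by linarith
  then show False
  proof cases
    case 1 then show False using til_mono[OF 1] a by simp
  next
    case 2 then show False using til_mono[OF 2] a by simp
  qed
qed

lemma tidx_exists: "\<exists>t. c t \<le> j \<and> j < c (t + 1)"
proof -
  have fw: "\<exists>t. c t \<le> c 0 + int n \<and> c 0 + int n < c (t + 1)" for n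
  proof (induction n)
    case 0 show ?case using til_strict[of 0 1] by (intro exI[of _ 0]) simp
  next
    case (Suc n)
    then obtain t where t: "c t \<le> c 0 + int n" "c 0 + int n < c (t + 1)" by blast
    show ?case
    proof (cases "c 0 + int (Suc n) < c (t + 1)")
      case True then show ?thesis using t by (intro exI[of _ t]) simp
    next
      case False
      then have "c (t + 1) = c 0 + int (Suc n)" using t by simp
      moreover have "c (t + 1) < c (t + 1 + 1)" using til_strict by simp
      ultimately show ?thesis by (intro exI[of _ "t + 1"]) simp
    qed
  qed
  have bw: "\<exists>t. c t \<le> c 0 - int n \<and> c 0 - int n < c (t + 1)" for n
  proof (induction n)
    case 0 show ?case using til_strict[of 0 1] by (intro exI[of _ 0]) simp
  next
    case (Suc n)
    then obtain t where t: "c t \<le> c 0 - int n" "c 0 - int n < c (t + 1)" by blast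
    show ?case
    proof (cases "c t \<le> c 0 - int (Suc n)")
      case True then show ?thesis using t by (intro exI[of _ t]) simp
    next
      case False
      then have "c t = c 0 - int n" using t by simp
      moreover have "c (t - 1) < c t" using til_strict by simp
      ultimately show ?thesis by (intro exI[of _ "t - 1"]) simp
    qed
  qed
  show ?thesis
  proof (cases "c 0 \<le> j")
    case True then show ?thesis using fw[of "nat (j - c 0)"] by simp
  next
    case False then show ?thesis using bw[of "nat (c 0 - j)"] by simp
  qed
qed

lemma tidx_eq: "c t \<le> j \<Longrightarrow> j < c (t + 1) \<Longrightarrow> tidx c j = t"
  unfolding tidx_def using tidx_unique by blast

lemma tidx_range: "c (tidx c j) \<le> j \<and> j < c (tidx c j + 1)"
  using tidx_exists[of j] tidx_eq by metis

lemma tidx_c: "tidx c (c i) = i"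
  using til_strict[of i "i + 1"] by (intro tidx_eq) auto

lemma tidx_c1: "tidx c (c i - 1) = i - 1"
  using til_strict[of "i - 1" i] by (intro tidx_eq) auto

lemma tidx_mono: "j \<le> j' \<Longrightarrow> tidx c j \<le> tidx c j'"
proof (rule ccontr)
  assume a: "j \<le> j'" "\<not> tidx c j \<le> tidx c j'"
  then have "tidx c j' + 1 \<le> tidx c j" by simp
  then have "c (tidx c j' + 1) \<le> c (tidx c j)" by (rule til_mono)
  then show False using tidx_range[of j] tidx_range[of j'] a by simp
qed

definition "fus i0 m = map (\<lambda>q. w (i0 + int q)) [0..<m]"
definition "fvs i0 m = map (\<lambda>q. y (i0 + int q)) [0..<m]"

lemma fus_concat: "concat (fus i0 m) = seq_word x (c i0) (nat (c (i0 + int m) - c i0))"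
proof (induction m)
  case 0 then show ?case by (simp add: fus_def seq_word_def)
next
  case (Suc m)
  have g: "c i0 \<le> c (i0 + int m)" by (rule til_mono) simp
  have e: "i0 + int (Suc m) = i0 + int m + 1" by simp
  have n: "nat (c (i0 + int (Suc m)) - c i0) = nat (c (i0 + int m) - c i0) + length (w (i0 + int m))"
    unfolding e til_c using g by simp
  have tw: "seq_word x (c (i0 + int m)) (length (w (i0 + int m))) = w (i0 + int m)"
    by (rule nth_equalityI) (simp_all add: til_x)
  have "concat (fus i0 (Suc m)) = concat (fus i0 m) @ w (i0 + int m)" by (simp add: fus_def)
  also have "\<dots> = seq_word x (c i0) (nat (c (i0 + int m) - c i0)) @
      seq_word x (c i0 + int (nat (c (i0 + int m) - c i0))) (length (w (i0 + int m)))"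
    using Suc g tw by simp
  also have "\<dots> = seq_word x (c i0) (nat (c (i0 + int (Suc m)) - c i0))"
    unfolding n seq_word_append ..
  finally show ?case .
qed

lemma fus_ps: "q \<le> m \<Longrightarrow> piece_start (fus i0 m) q = nat (c (i0 + int q) - c i0)"
proof -
  assume q: "q \<le> m"
  have "take q (fus i0 m) = fus i0 q" unfolding fus_def using q by (simp add: take_map)
  then show ?thesis unfolding piece_start_def using fus_concat[of i0 q] by simp
qed

lemma fus_len[simp]: "length (fus i0 m) = m" by (simp add: fus_def)
lemma fvs_len[simp]: "length (fvs i0 m) = m" by (simp add: fvs_def)

lemma fus_ne: "nonempty_pieces (fus i0 m)"
proof -
  have "\<And>i. w i \<noteq> []" using til_pos by (metis length_greater_0_conv)
  then show ?thesis by (auto simp: nonempty_pieces_def fus_def)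
qed

lemma fus_pidx:
  assumes j: "j < nat (c (i0 + int m) - c i0)"
  shows "piece_idx (fus i0 m) j = nat (tidx c (c i0 + int j) - i0) \<and> i0 \<le> tidx c (c i0 + int j)
     \<and> tidx c (c i0 + int j) < i0 + int m"
proof -
  define t where "t = tidx c (c i0 + int j)"
  have r: "c t \<le> c i0 + int j" "c i0 + int j < c (t + 1)" using tidx_range unfolding t_def by auto
  have t0: "i0 \<le> t"
  proof (rule ccontr)
    assume "\<not> i0 \<le> t" then have "t + 1 \<le> i0" by simp
    then show False using til_mono[of "t + 1" i0] r by simp
  qed
  have t1: "t < i0 + int m"
  proof (rule ccontr)
    assume "\<not> t < i0 + int m" then have "i0 + int m \<le> t" by simp
    then show False using til_mono[of "i0 + int m" t] r j by simp
  qed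
  define q where "q = nat (t - i0)"
  have q: "q < m" "i0 + int q = t" using t0 t1 unfolding q_def by auto
  have "piece_idx (fus i0 m) j = q"
  proof (rule pidx_eq)
    show "piece_start (fus i0 m) q \<le> j" using fus_ps[of q m i0] q r til_mono[of i0 t] t0 by simp
    have e: "i0 + int (Suc q) = t + 1" using q by simp
    have "piece_start (fus i0 m) (Suc q) = nat (c (t + 1) - c i0)" using fus_ps[of "Suc q" m i0] q unfolding e by simp
    then show "j < piece_start (fus i0 m) (Suc q)" using r til_mono[of i0 t] t0 by simp
  qed
  then show ?thesis using q t0 t1 t_def q_def by simp
qed

lemma fus_dstart:
  assumes j: "j < nat (c (i0 + int m) - c i0)"
  shows "dstart (fus i0 m) j \<longleftrightarrow> c i0 + int j \<in> range c"
proof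
  assume "dstart (fus i0 m) j"
  then obtain q where q: "q < m" "piece_start (fus i0 m) q = j" unfolding dstart_def by auto
  then have "nat (c (i0 + int q) - c i0) = j" using fus_ps[of q m i0] by simp
  moreover have "c i0 \<le> c (i0 + int q)" by (rule til_mono) simp
  ultimately have "c (i0 + int q) = c i0 + int j" by simp
  then show "c i0 + int j \<in> range c" by (metis rangeI)
next
  assume "c i0 + int j \<in> range c"
  then obtain t where t: "c t = c i0 + int j" by auto
  then have "tidx c (c i0 + int j) = t" by (metis tidx_c)
  then have r: "piece_idx (fus i0 m) j = nat (t - i0)" "i0 \<le> t" "t < i0 + int m"
    using fus_pidx[OF j] by auto
  have "piece_start (fus i0 m) (nat (t - i0)) = j" using fus_ps[of "nat (t - i0)" m i0] r t by simp
  then show "dstart (fus i0 m) j" unfolding dstart_def using r by (intro exI[of _ "nat (t - i0)"]) auto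
qed

lemma window_decomp:
  assumes yX: "y \<in> subshift \<theta>" and n: "maxlen \<theta> < n"
  shows "\<exists>d. d \<in> infl_decomps \<theta> (seq_word x P n) \<and>
     (\<forall>j<n. droot d j = y (tidx c (P + int j))) \<and>
     (\<forall>j. 0 < j \<and> j < n \<longrightarrow> (dstart (fst d) j \<longleftrightarrow> P + int j \<in> range c))"
proof -
  define i0 where "i0 = tidx c P"
  define i1 where "i1 = tidx c (P + int n - 1)"
  have r0: "c i0 \<le> P" "P < c (i0 + 1)" using tidx_range unfolding i0_def by auto
  have r1: "c i1 \<le> P + int n - 1" "P + int n - 1 < c (i1 + 1)" using tidx_range[of "P + int n - 1"] unfolding i1_def by auto
  have "c (i0 + 1) \<le> P + int n - 1"
    using til_c[of i0] til_le[of i0] r0 n by simp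
  then have i01: "i0 + 1 \<le> i1" unfolding i1_def
    using tidx_mono[of "c (i0 + 1)" "P + int n - 1"] tidx_c by simp
  define m where "m = nat (i1 - i0) + 1"
  have im: "i0 + int m = i1 + 1" using i01 unfolding m_def by simp
  define D where "D = (fus i0 m, fvs i0 m)"
  define off where "off = nat (P - c i0)"
  define Z where "Z = nat (c (i0 + int m) - c i0)"
  have cZ: "concat (fus i0 m) = seq_word x (c i0) Z" using fus_concat unfolding Z_def .
  have offn: "off + n \<le> Z" unfolding off_def Z_def im using r0 r1 by simp
  have n0: "0 < n" using n by simp
  have e1: "c i0 + int off = P" using r0 off_def by simp
  have sub: "take n (drop off (concat (fus i0 m))) = seq_word x P n"
    unfolding cZ seq_word_sub[OF offn] e1 ..
  have lenZ: "length (concat (fus i0 m)) = Z" unfolding cZ by simp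
  have ne: "nonempty_pieces (fus i0 m)" by (rule fus_ne)
  have lv: "length (fvs i0 m) = length (fus i0 m)" by simp
  have full: "\<forall>q<length (fus i0 m). fus i0 m ! q \<in> \<theta> (fvs i0 m ! q)"
    by (simp add: fus_def fvs_def til_w)
  have lg: "legal \<theta> (fvs i0 m)"
  proof -
    have "fvs i0 m = seq_word y i0 m" by (simp add: fvs_def seq_word_def)
    then show ?thesis using seq_word_legal[OF yX] by simp
  qed
  have pa: "piece_idx (fus i0 m) off = nat (tidx c (c i0 + int off) - i0)"
    using fus_pidx[of off] offn n0 unfolding Z_def by simp
  have pb: "piece_idx (fus i0 m) (off + n - 1) = nat (tidx c (c i0 + int (off + n - 1)) - i0)"
    using fus_pidx[of "off + n - 1"] offn n0 unfolding Z_def by simp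
  have e2: "c i0 + int (off + n - 1) = P + int n - 1" using r0 off_def n0 by simp
  have two: "piece_idx (fus i0 m) off < piece_idx (fus i0 m) (off + n - 1)"
    unfolding pa pb e1 e2 using i01 i0_def[symmetric] i1_def[symmetric] by simp
  have offn': "off + n \<le> length (concat (fus i0 m))" using offn lenZ by simp
  have mem: "induced_decomp D off n \<in> infl_decomps \<theta> (seq_word x P n)"
    unfolding D_def sub[symmetric] by (rule induced_in_decomps[OF ne lv n0 offn' full lg two])
  note P = induced_props[OF ne lv n0 offn']
  have rt: "\<forall>j<n. droot (induced_decomp D off n) j = y (tidx c (P + int j))"
  proof (intro allI impI)
    fix j assume j: "j < n"
    have jj: "off + j < Z" using j offn by simp
    have "droot (induced_decomp D off n) j = droot D (off + j)" using P(4) j unfolding D_def by simp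
    also have "\<dots> = fvs i0 m ! piece_idx (fus i0 m) (off + j)" by (simp add: droot_def D_def)
    also have "\<dots> = y (tidx c (P + int j))"
    proof -
      have eq: "c i0 + int (off + j) = P + int j" using e1 by simp
      have f: "piece_idx (fus i0 m) (off + j) = nat (tidx c (P + int j) - i0)"
        "i0 \<le> tidx c (P + int j)" "tidx c (P + int j) < i0 + int m"
        using fus_pidx[of "off + j" i0 m] jj unfolding Z_def eq by auto
      have "nat (tidx c (P + int j) - i0) < m" using f by simp
      then show ?thesis unfolding f(1) fvs_def using f by simp
    qed
    finally show "droot (induced_decomp D off n) j = y (tidx c (P + int j))" .
  qed
  have st: "\<forall>j. 0 < j \<and> j < n \<longrightarrow> (dstart (fst (induced_decomp D off n)) j \<longleftrightarrow> P + int j \<in> range c)"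
  proof (intro allI impI)
    fix j assume j: "0 < j \<and> j < n"
    have jj: "off + j < Z" using j offn by simp
    have "dstart (fst (induced_decomp D off n)) j \<longleftrightarrow> dstart (fus i0 m) (off + j)"
      using P(5) j unfolding D_def by simp
    also have "\<dots> \<longleftrightarrow> c i0 + int (off + j) \<in> range c" using fus_dstart[of "off + j"] jj unfolding Z_def by simp
    also have "c i0 + int (off + j) = P + int j" using e1 by simp
    finally show "dstart (fst (induced_decomp D off n)) j \<longleftrightarrow> P + int j \<in> range c" .
  qed
  show ?thesis using mem rt st by blast
qed

end


lemma infl_len_eq: "compatible \<theta> \<Longrightarrow> u \<in> \<theta> a \<Longrightarrow> infl_len \<theta> a = length u"
proof -
  assume c: "compatible \<theta>" and u: "u \<in> \<theta> a"
  have "(SOME u. u \<in> \<theta> a) \<in> \<theta> a" using u by (rule someI)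
  then have "mset (SOME u. u \<in> \<theta> a) = mset u" using c u unfolding compatible_def by blast
  then show ?thesis unfolding infl_len_def by (rule mset_eq_length)
qed

lemma rep_tiling:
  assumes "shift_pow (- int k) x \<in> subst_seq \<theta> y"
  shows "\<exists>w c. tiling \<theta> x y w c \<and> c 0 = - int k"
proof -
  obtain w c where wc: "\<forall>i. w i \<in> \<theta> (y i)" "c 0 = 0" "\<forall>i. c (i + 1) = c i + int (length (w i))"
    "\<forall>i k'. k' < length (w i) \<longrightarrow> shift_pow (- int k) x (c i + int k') = w i ! k'"
    using assms unfolding subst_seq_def by blast
  have "tiling \<theta> x y w (\<lambda>i. c i - int k)"
    unfolding tiling_def using wc by (auto simp: shift_pow_def algebra_simps)
  then show ?thesis using wc(2) by (intro exI[of _ w] exI[of _ "\<lambda>i. c i - int k"]) simp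
qed

lemma tiling_rep:
  assumes "tiling \<theta> x y w c" "c 0 = - int k"
  shows "shift_pow (- int k) x \<in> subst_seq \<theta> y"
proof -
  have "\<forall>i. w i \<in> \<theta> (y i)" "\<forall>i. c (i + 1) = c i + int (length (w i))"
    "\<forall>i k'. k' < length (w i) \<longrightarrow> x (c i + int k') = w i ! k'"
    using assms(1) unfolding tiling_def by auto
  then show ?thesis unfolding subst_seq_def shift_pow_def using assms(2)
    by (intro CollectI exI[of _ w] exI[of _ "\<lambda>i. c i + int k"]) (auto simp: algebra_simps)
qed

lemma tiling_inj:
  fixes \<theta> :: "'a::finite \<Rightarrow> 'a list set"
  assumes rs: "random_subst \<theta>" and cp: "compatible \<theta>"
    and T1: "tiling \<theta> x y1 w1 c1" and T2: "tiling \<theta> x y2 w2 c2"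
    and c10: "c1 0 = - int k1" and c20: "c2 0 = - int k2"
    and k1: "k1 < length (w1 0)" and k2: "k2 < length (w2 0)"
    and H: "\<forall>j. y1 (tidx c1 j) = y2 (tidx c2 j) \<and> (j \<in> range c1 \<longleftrightarrow> j \<in> range c2)"
  shows "y1 = y2 \<and> k1 = k2"
proof -
  note t1 = til_c[OF rs T1] til_mono[OF rs T1] tidx_c[OF rs T1] tidx_c1[OF rs T1] til_w[OF rs T1]
  note t2 = til_c[OF rs T2] til_mono[OF rs T2] tidx_c[OF rs T2] tidx_c1[OF rs T2] til_w[OF rs T2]
  have le: "c1 0 \<le> c2 0" if T1: "tiling \<theta> x y1 w1 c1" and T2: "tiling \<theta> x y2 w2 c2"
    and c10: "c1 0 = - int k1" and c20: "c2 0 = - int k2" and k2: "k2 < length (w2 0)"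
    and H: "\<forall>j. (j \<in> range c1 \<longleftrightarrow> j \<in> range c2)" for y1 w1 c1 y2 w2 c2 k1 k2
  proof -
    have "c1 0 \<in> range c2" using H by blast
    then obtain t where t: "c2 t = c1 0" by auto
    have "t \<le> 0"
    proof (rule ccontr)
      assume "\<not> t \<le> 0"
      then have "c2 1 \<le> c2 t" using til_mono[OF rs T2] by simp
      moreover have "c2 1 = c2 0 + int (length (w2 0))" using til_c[OF rs T2, of 0] by simp
      ultimately show False using t c10 c20 k2 by simp
    qed
    then show ?thesis using t til_mono[OF rs T2, of t 0] by simp
  qed
  have c00: "c1 0 = c2 0"
    using le[OF T1 T2 c10 c20 k2] le[OF T2 T1 c20 c10 k1] H by (meson order_antisym)
  have P: "c1 i = c2 i \<and> y1 i = y2 i" for i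
  proof (induction i rule: int_induct[where k = 0])
    case base
    have "y1 (tidx c1 (c1 0)) = y2 (tidx c2 (c1 0))" using H by blast
    moreover have "tidx c1 (c1 0) = 0" by (rule t1(3))
    moreover have "tidx c2 (c1 0) = 0" unfolding c00 by (rule t2(3))
    ultimately show ?case using c00 by simp
  next
    case (step1 i)
    have "c1 (i + 1) = c1 i + int (infl_len \<theta> (y1 i))" using t1(1) infl_len_eq[OF cp t1(5)] by simp
    moreover have "c2 (i + 1) = c2 i + int (infl_len \<theta> (y2 i))" using t2(1) infl_len_eq[OF cp t2(5)] by simp
    ultimately have c: "c1 (i + 1) = c2 (i + 1)" using step1 by simp
    have "y1 (tidx c1 (c1 (i + 1))) = y2 (tidx c2 (c1 (i + 1)))" using H by blast
    moreover have "tidx c1 (c1 (i + 1)) = i + 1" by (rule t1(3))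
    moreover have "tidx c2 (c1 (i + 1)) = i + 1" unfolding c by (rule t2(3))
    ultimately show ?case using c by simp
  next
    case (step2 i)
    have "y1 (tidx c1 (c1 i - 1)) = y2 (tidx c2 (c1 i - 1))" using H by blast
    moreover have "tidx c1 (c1 i - 1) = i - 1" by (rule t1(4))
    moreover have "tidx c2 (c1 i - 1) = i - 1" using step2(2) t2(4)[of i] by simp
    ultimately have y: "y1 (i - 1) = y2 (i - 1)" by simp
    have "c1 i = c1 (i - 1) + int (infl_len \<theta> (y1 (i - 1)))"
      using t1(1)[of "i - 1"] infl_len_eq[OF cp t1(5)] by simp
    moreover have "c2 i = c2 (i - 1) + int (infl_len \<theta> (y2 (i - 1)))"
      using t2(1)[of "i - 1"] infl_len_eq[OF cp t2(5)] by simp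
    ultimately show ?case using step2 y by simp
  qed
  then show ?thesis using c00 c10 c20 by auto
qed

definition labset :: "('a \<Rightarrow> 'a list set) \<Rightarrow> 'a lab set" where
  "labset \<theta> = {(a, t, r). t \<in> \<theta> a \<and> r < length t}"

lemma labset_finite:
  fixes \<theta> :: "'a::finite \<Rightarrow> 'a list set"
  assumes rs: "random_subst \<theta>"
  shows "finite (labset \<theta>)"
proof -
  have "labset \<theta> \<subseteq> (UNIV :: 'a set) \<times> (\<Union>a. \<theta> a) \<times> {..<maxlen \<theta>}"
    unfolding labset_def using maxlen_ge[OF rs] by (auto intro: less_le_trans)
  moreover have "finite ((UNIV :: 'a set) \<times> (\<Union>a. \<theta> a) \<times> {..<maxlen \<theta>})"
    using rs unfolding random_subst_def by simp
  ultimately show ?thesis by (rule finite_subset)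
qed

lemma LabWin_labset: "LabWin \<theta> x l p n \<Longrightarrow> p \<le> j \<Longrightarrow> j < p + int n \<Longrightarrow> l j \<in> labset \<theta>"
  unfolding LabWin_def lab_at_def labset_def by (cases "l j") auto

lemma family_limit:
  fixes \<theta> :: "'a::finite \<Rightarrow> 'a list set"
  assumes rs: "random_subst \<theta>"
    and H: "\<forall>n. LabWin \<theta> (Xf n) (L1 n) (- int n) (2*n+1) \<and> LabWin \<theta> (Xf n) (L2 n) (- int n) (2*n+1)"
  shows "\<exists>x l1 l2. LabX \<theta> x l1 \<and> LabX \<theta> x l2 \<and>
    (\<forall>M. \<exists>n\<ge>M. \<forall>j. \<bar>j\<bar> \<le> int M \<longrightarrow> x j = Xf n j \<and> l1 j = L1 n j \<and> l2 j = L2 n j)"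
proof -
  obtain a :: 'a where True by simp
  obtain t where t: "t \<in> \<theta> a" using rs unfolding random_subst_def by blast
  have t0: "(a, t, 0::nat) \<in> labset \<theta>" using rs_nonempty[OF rs t] t unfolding labset_def by simp
  define b0 where "b0 = (a, (a, t, 0::nat), (a, t, 0::nat))"
  define B where "B = (UNIV :: 'a set) \<times> labset \<theta> \<times> labset \<theta>"
  have finB: "finite B" unfolding B_def using labset_finite[OF rs] by simp
  define F where "F n j = (if \<bar>j\<bar> \<le> int n then (Xf n j, L1 n j, L2 n j) else b0)" for n j
  have inB: "\<forall>n j. F n j \<in> B"
  proof (intro allI)
    fix n :: nat and j :: int
    show "F n j \<in> B"
    proof (cases "\<bar>j\<bar> \<le> int n")
      case True
      have W1: "LabWin \<theta> (Xf n) (L1 n) (- int n) (2*n+1)" using H by blast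
      have W2: "LabWin \<theta> (Xf n) (L2 n) (- int n) (2*n+1)" using H by blast
      have jb: "- int n \<le> j" "j < - int n + int (2*n+1)" using True by auto
      have "L1 n j \<in> labset \<theta>" "L2 n j \<in> labset \<theta>"
        using LabWin_labset[OF W1 jb] LabWin_labset[OF W2 jb] by auto
      then show ?thesis unfolding F_def B_def using True by simp
    next
      case False then show ?thesis unfolding F_def B_def b0_def using t0 by simp
    qed
  qed
  obtain g where g: "\<forall>m. \<exists>n\<ge>m. \<forall>j. \<bar>j\<bar> \<le> int m \<longrightarrow> F n j = g j"
    using konig[OF finB inB] by blast
  define x where "x j = fst (g j)" for j
  define l1 where "l1 j = fst (snd (g j))" for j
  define l2 where "l2 j = snd (snd (g j))" for j
  have agree: "\<forall>M. \<exists>n\<ge>M. \<forall>j. \<bar>j\<bar> \<le> int M \<longrightarrow> x j = Xf n j \<and> l1 j = L1 n j \<and> l2 j = L2 n j"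
  proof (intro allI)
    fix M
    obtain n where n: "n \<ge> M" "\<forall>j. \<bar>j\<bar> \<le> int M \<longrightarrow> F n j = g j" using g by blast
    have "x j = Xf n j \<and> l1 j = L1 n j \<and> l2 j = L2 n j" if j: "\<bar>j\<bar> \<le> int M" for j
    proof -
      have "\<bar>j\<bar> \<le> int n" using j n(1) by linarith
      then have "F n j = (Xf n j, L1 n j, L2 n j)" unfolding F_def by simp
      moreover have "F n j = g j" using n(2) j by blast
      ultimately show ?thesis unfolding x_def l1_def l2_def by (metis fst_conv snd_conv)
    qed
    then show "\<exists>n\<ge>M. \<forall>j. \<bar>j\<bar> \<le> int M \<longrightarrow> x j = Xf n j \<and> l1 j = L1 n j \<and> l2 j = L2 n j"
      using n by blast
  qed
  have "LabX \<theta> x l1"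
  proof (rule lab_limit, intro allI)
    fix M
    obtain n where n: "n \<ge> M" "\<forall>j. \<bar>j\<bar> \<le> int M \<longrightarrow> x j = Xf n j \<and> l1 j = L1 n j \<and> l2 j = L2 n j"
      using agree by blast
    have W: "LabWin \<theta> (Xf n) (L1 n) (- int n) (2*n+1)" using H by blast
    have "LabWin \<theta> (Xf n) (L1 n) (- int M) (2*M+1)" by (rule LabWin_mono[OF W]) (use n(1) in auto)
    moreover have "\<forall>j. \<bar>j\<bar> \<le> int M \<longrightarrow> Xf n j = x j \<and> L1 n j = l1 j" using n(2) by simp
    ultimately show "\<exists>x' l'. (\<forall>j. \<bar>j\<bar> \<le> int M \<longrightarrow> x' j = x j \<and> l' j = l1 j) \<and> LabWin \<theta> x' l' (- int M) (2*M+1)"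
      by blast
  qed
  moreover have "LabX \<theta> x l2"
  proof (rule lab_limit, intro allI)
    fix M
    obtain n where n: "n \<ge> M" "\<forall>j. \<bar>j\<bar> \<le> int M \<longrightarrow> x j = Xf n j \<and> l1 j = L1 n j \<and> l2 j = L2 n j"
      using agree by blast
    have W: "LabWin \<theta> (Xf n) (L2 n) (- int n) (2*n+1)" using H by blast
    have "LabWin \<theta> (Xf n) (L2 n) (- int M) (2*M+1)" by (rule LabWin_mono[OF W]) (use n(1) in auto)
    moreover have "\<forall>j. \<bar>j\<bar> \<le> int M \<longrightarrow> Xf n j = x j \<and> L2 n j = l2 j" using n(2) by simp
    ultimately show "\<exists>x' l'. (\<forall>j. \<bar>j\<bar> \<le> int M \<longrightarrow> x' j = x j \<and> l' j = l2 j) \<and> LabWin \<theta> x' l' (- int M) (2*M+1)"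
      by blast
  qed
  ultimately show ?thesis using agree by blast
qed


lemma lab_rep:
  assumes cp: "compatible \<theta>" and LX: "LabX \<theta> x l"
  shows "\<exists>y. y \<in> subshift \<theta> \<and> snd (snd (l 0)) < infl_len \<theta> (y 0) \<and>
    shift_pow (- int (snd (snd (l 0)))) x \<in> subst_seq \<theta> y \<and> y 0 = fst (l 0)"
proof -
  obtain y w c where T: "tiling \<theta> x y w c" "c 0 = - int (snd (snd (l 0)))" "y 0 = fst (l 0)"
    "w 0 = fst (snd (l 0))" "y \<in> subshift \<theta>"
    using lab_tiling[OF LX] by blast
  have "lab_at \<theta> x l 0" using LX unfolding LabX_def by blast
  then have r: "snd (snd (l 0)) < length (fst (snd (l 0)))" unfolding lab_at_def by (cases "l 0") auto
  have "w 0 \<in> \<theta> (y 0)" using T(1) unfolding tiling_def by blast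
  then have "infl_len \<theta> (y 0) = length (w 0)" by (rule infl_len_eq[OF cp])
  then show ?thesis using T r tiling_rep[OF T(1) T(2)] by (intro exI[of _ y]) simp
qed

lemma two_pieces:
  fixes \<theta> :: "'a::finite \<Rightarrow> 'a list set"
  assumes rs: "random_subst \<theta>" and d: "d \<in> infl_decomps \<theta> W" and W: "maxlen \<theta> < length W"
  shows "2 \<le> length (fst d)"
proof (rule ccontr)
  assume "\<not> 2 \<le> length (fst d)"
  moreover have "fst d \<noteq> []" using infl_decomps_basic[OF d] W by auto
  ultimately obtain p where p: "fst d = [p]" by (cases "fst d") (auto simp: Suc_le_eq)
  have "concat (fst d) = W" using infl_decomps_basic[OF d] by simp
  then have pW: "p = W" using p by simp
  obtain us v where dd: "d = (us, v)" by (cases d)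
  have "\<exists>t\<in>\<theta> (v ! 0). suffix (us ! 0) t" using d p dd unfolding infl_decomps_def by auto
  then obtain t where t: "t \<in> \<theta> (v ! 0)" "suffix W t" using p pW dd by auto
  have "length W \<le> length t" using t(2) by (rule suffix_length_le)
  also have "\<dots> \<le> maxlen \<theta>" by (rule maxlen_ge[OF rs t(1)])
  finally show False using W by simp
qed


lemma loc_H:
  fixes \<theta> :: "'a::finite \<Rightarrow> 'a list set"
  assumes rs: "random_subst \<theta>"
    and N: "\<forall>u. legal \<theta> u \<and> u \<noteq> [] \<longrightarrow> (\<exists>N'\<le>N. recognisable_radius \<theta> u N')"
    and xX: "x \<in> subshift \<theta>"
    and T1: "tiling \<theta> x y1 w1 c1" and Y1: "y1 \<in> subshift \<theta>"
    and T2: "tiling \<theta> x y2 w2 c2" and Y2: "y2 \<in> subshift \<theta>"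
  shows "y1 (tidx c1 j) = y2 (tidx c2 j) \<and> (j \<in> range c1 \<longleftrightarrow> j \<in> range c2)"
proof -
  define L where "L = maxlen \<theta>"
  have L0: "0 < L" unfolding L_def by (rule maxlen_pos[OF rs])
  define u where "u = seq_word x (j - int L) (2*L+1)"
  have lu: "legal \<theta> u" unfolding u_def by (rule seq_word_legal[OF xX])
  have une: "u \<noteq> []" unfolding u_def by (simp add: seq_word_def)
  obtain N' where N': "N' \<le> N" "recognisable_radius \<theta> u N'" using N lu une by blast
  define P where "P = j - int L - int N'"
  define ul where "ul = seq_word x P N'"
  define ur where "ur = seq_word x (j + int L + 1) N'"
  define n where "n = N' + (2*L+1) + N'"
  have Wd: "ul @ u @ ur = seq_word x P n"
  proof -
    have "seq_word x P n = seq_word x P (N' + (2*L+1)) @ seq_word x (P + int (N' + (2*L+1))) N'"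
      unfolding n_def by (rule seq_word_append)
    also have "seq_word x P (N' + (2*L+1)) = ul @ seq_word x (P + int N') (2*L+1)"
      unfolding ul_def by (rule seq_word_append)
    also have "P + int N' = j - int L" unfolding P_def by simp
    also have "P + int (N' + (2*L+1)) = j + int L + 1" unfolding P_def by simp
    finally show ?thesis unfolding u_def ur_def by simp
  qed
  have lW: "legal \<theta> (ul @ u @ ur)" unfolding Wd by (rule seq_word_legal[OF xX])
  have nL: "maxlen \<theta> < n" unfolding n_def L_def by simp
  obtain d1 where d1: "d1 \<in> infl_decomps \<theta> (seq_word x P n)"
    "\<forall>j<n. droot d1 j = y1 (tidx c1 (P + int j))"
    "\<forall>j. 0 < j \<and> j < n \<longrightarrow> (dstart (fst d1) j \<longleftrightarrow> P + int j \<in> range c1)"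
    using window_decomp[OF rs T1 Y1 nL] by blast
  obtain d2 where d2: "d2 \<in> infl_decomps \<theta> (seq_word x P n)"
    "\<forall>j<n. droot d2 j = y2 (tidx c2 (P + int j))"
    "\<forall>j. 0 < j \<and> j < n \<longrightarrow> (dstart (fst d2) j \<longleftrightarrow> P + int j \<in> range c2)"
    using window_decomp[OF rs T2 Y2 nL] by blast
  have lul: "length ul = N'" "length ur = N'" unfolding ul_def ur_def by simp_all
  have R: "\<forall>d1\<in>infl_decomps \<theta> (ul @ u @ ur). \<forall>d2\<in>infl_decomps \<theta> (ul @ u @ ur).
            induced_decomp d1 N' (length u) = induced_decomp d2 N' (length u)"
    using N'(2) lul lW unfolding recognisable_radius_def by blast
  have eq: "induced_decomp d1 N' (length u) = induced_decomp d2 N' (length u)"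
    using R d1(1) d2(1) unfolding Wd by blast
  have lu': "length u = 2*L+1" unfolding u_def by simp
  note b1 = infl_decomps_basic[OF d1(1)] and b2 = infl_decomps_basic[OF d2(1)]
  have eq': "induced_decomp (fst d1, snd d1) N' (2*L+1) = induced_decomp (fst d2, snd d2) N' (2*L+1)"
    using eq lu' by simp
  have cc: "concat (fst d1) = concat (fst d2)" using b1 b2 by simp
  have im: "N' + (2*L+1) \<le> length (concat (fst d1))" using b1 n_def by simp
  have I: "(\<forall>j<2*L+1. droot (fst d1, snd d1) (N'+j) = droot (fst d2, snd d2) (N'+j)) \<and>
    (\<forall>j. 0 < j \<and> j < 2*L+1 \<longrightarrow> dstart (fst d1) (N'+j) = dstart (fst d2) (N'+j))"
    using induced_eq_iff[of "fst d1" "fst d2" "snd d1" "snd d2" "2*L+1" N'] b1 b2 cc im eq' by simp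
  have e: "P + int (N' + L) = j" unfolding P_def by simp
  have r: "droot d1 (N' + L) = droot d2 (N' + L)" using I by simp
  have s: "dstart (fst d1) (N' + L) = dstart (fst d2) (N' + L)" using I L0 by simp
  have nb: "N' + L < n" "0 < N' + L" using L0 n_def by auto
  have "droot d1 (N' + L) = y1 (tidx c1 j)" using d1(2) nb e by metis
  moreover have "droot d2 (N' + L) = y2 (tidx c2 j)" using d2(2) nb e by metis
  moreover have "dstart (fst d1) (N' + L) \<longleftrightarrow> j \<in> range c1" using d1(3) nb e by metis
  moreover have "dstart (fst d2) (N' + L) \<longleftrightarrow> j \<in> range c2" using d2(3) nb e by metis
  ultimately show ?thesis using r s by simp
qed

lemma loc_rec:
  fixes \<theta> :: "'a::finite \<Rightarrow> 'a list set"
  assumes rs: "random_subst \<theta>" and cp: "compatible \<theta>" and loc: "locally_recognisable \<theta>"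
  shows "recognisable \<theta>"
  unfolding recognisable_def
proof (intro conjI ballI cp)
  fix x assume xX: "x \<in> subshift \<theta>"
  obtain N where N: "\<forall>u. legal \<theta> u \<and> u \<noteq> [] \<longrightarrow> (\<exists>N'\<le>N. recognisable_radius \<theta> u N')"
    using loc unfolding locally_recognisable_def by blast
  have fam: "\<forall>n. \<exists>l. LabWin \<theta> x l (- int n) (2*n+1)"
  proof
    fix n
    define W where "W = seq_word x (- int n - 1) (2*n+3)"
    have lW: "legal \<theta> W" unfolding W_def by (rule seq_word_legal[OF xX])
    have "2 \<le> length W" unfolding W_def by simp
    then obtain l0 where l0: "LabWin \<theta> (\<lambda>j. W ! nat j) l0 0 (length W)"
      using legal_word_lab[OF rs lW] by blast
    have "LabWin \<theta> (\<lambda>j. W ! nat j) l0 1 (2*n+1)"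
      by (rule LabWin_mono[OF l0]) (simp_all add: W_def)
    then have "LabWin \<theta> (\<lambda>j. W ! nat (j + (int n + 1))) (\<lambda>j. l0 (j + (int n + 1))) (1 - (int n + 1)) (2*n+1)"
      by (rule LabWin_shift)
    then have "LabWin \<theta> (\<lambda>j. W ! nat (j + (int n + 1))) (\<lambda>j. l0 (j + (int n + 1))) (- int n) (2*n+1)"
      by simp
    then have "LabWin \<theta> x (\<lambda>j. l0 (j + (int n + 1))) (- int n) (2*n+1)"
    proof (rule LabWin_cong)
      fix j :: int assume j: "- int n \<le> j" "j < - int n + int (2*n+1)"
      then have k: "nat (j + (int n + 1)) < 2*n+3" by simp
      have "W ! nat (j + (int n + 1)) = x (- int n - 1 + int (nat (j + (int n + 1))))"
        unfolding W_def using k by simp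
      also have "\<dots> = x j" using j by simp
      finally show "W ! nat (j + (int n + 1)) = x j \<and> l0 (j + (int n + 1)) = l0 (j + (int n + 1))" by simp
    qed
    then show "\<exists>l. LabWin \<theta> x l (- int n) (2*n+1)" by blast
  qed
  then obtain Lf where Lf: "\<forall>n. LabWin \<theta> x (Lf n) (- int n) (2*n+1)" by metis
  obtain x' l1 l2 where lim: "LabX \<theta> x' l1"
    "\<forall>M. \<exists>n\<ge>M. \<forall>j. \<bar>j\<bar> \<le> int M \<longrightarrow> x' j = x j \<and> l1 j = Lf n j \<and> l2 j = Lf n j"
    using family_limit[OF rs, of "\<lambda>n. x" Lf Lf] Lf by blast
  have "x' = x"
  proof
    fix j
    obtain n where "\<forall>i. \<bar>i\<bar> \<le> int (nat \<bar>j\<bar>) \<longrightarrow> x' i = x i \<and> l1 i = Lf n i \<and> l2 i = Lf n i"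
      using lim(2) by blast
    then show "x' j = x j" by simp
  qed
  then have LX: "LabX \<theta> x l1" using lim(1) by simp
  let ?P = "\<lambda>p. case p of (y, k) \<Rightarrow> y \<in> subshift \<theta> \<and> k < infl_len \<theta> (y 0) \<and>
      shift_pow (- int k) x \<in> subst_seq \<theta> y"
  show "\<exists>!p. ?P p"
  proof (rule ex_ex1I)
    obtain y where "y \<in> subshift \<theta> \<and> snd (snd (l1 0)) < infl_len \<theta> (y 0) \<and>
        shift_pow (- int (snd (snd (l1 0)))) x \<in> subst_seq \<theta> y"
      using lab_rep[OF cp LX] by blast
    then show "\<exists>p. ?P p" by (intro exI[of _ "(y, snd (snd (l1 0)))"]) simp
  next
    fix p q assume Pp: "?P p" and Pq: "?P q"
    obtain y1 k1 where p: "p = (y1, k1)" by (cases p)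
    obtain y2 k2 where q: "q = (y2, k2)" by (cases q)
    have h1: "y1 \<in> subshift \<theta>" "k1 < infl_len \<theta> (y1 0)" "shift_pow (- int k1) x \<in> subst_seq \<theta> y1"
      using Pp p by auto
    have h2: "y2 \<in> subshift \<theta>" "k2 < infl_len \<theta> (y2 0)" "shift_pow (- int k2) x \<in> subst_seq \<theta> y2"
      using Pq q by auto
    obtain w1 c1 where T1: "tiling \<theta> x y1 w1 c1" "c1 0 = - int k1" using rep_tiling[OF h1(3)] by blast
    obtain w2 c2 where T2: "tiling \<theta> x y2 w2 c2" "c2 0 = - int k2" using rep_tiling[OF h2(3)] by blast
    have kk1: "k1 < length (w1 0)" using h1(2) infl_len_eq[OF cp til_w[OF rs T1(1), of 0]] by simp
    have kk2: "k2 < length (w2 0)" using h2(2) infl_len_eq[OF cp til_w[OF rs T2(1), of 0]] by simp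
    have H: "\<forall>j. y1 (tidx c1 j) = y2 (tidx c2 j) \<and> (j \<in> range c1 \<longleftrightarrow> j \<in> range c2)"
      using loc_H[OF rs N xX T1(1) h1(1) T2(1) h2(1)] by blast
    have "y1 = y2 \<and> k1 = k2" by (rule tiling_inj[OF rs cp T1(1) T2(1) T1(2) T2(2) kk1 kk2 H])
    then show "p = q" using p q by simp
  qed
qed


definition ldiff :: "'a lab \<Rightarrow> 'a lab \<Rightarrow> bool" where
  "ldiff a b \<longleftrightarrow> fst a \<noteq> fst b \<or> (snd (snd a) = 0) \<noteq> (snd (snd b) = 0)"

lemma seq_word_sublist: "0 \<le> s \<Longrightarrow> s + int m \<le> int (length W) \<Longrightarrow>
   sublist (seq_word (\<lambda>i. W ! nat i) s m) W"
proof -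
  assume a: "0 \<le> s" "s + int m \<le> int (length W)"
  have "seq_word (\<lambda>i. W ! nat i) s m = take m (drop (nat s) W)"
    by (rule nth_equalityI) (use a in \<open>auto simp: nat_add_distrib\<close>)
  then show ?thesis by (metis sublist_drop sublist_order.order.trans sublist_take)
qed

lemma good_exists:
  fixes \<theta> :: "'a::finite \<Rightarrow> 'a list set"
  assumes rs: "random_subst \<theta>" and nl: "\<not> locally_recognisable \<theta>"
  shows "\<exists>G :: int \<Rightarrow> 'a \<times> 'a lab \<times> 'a lab.
    LabWin \<theta> (\<lambda>i. fst (G i)) (\<lambda>i. fst (snd (G i))) (- int n) (2*n+1) \<and>
    LabWin \<theta> (\<lambda>i. fst (G i)) (\<lambda>i. snd (snd (G i))) (- int n) (2*n+1) \<and>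
    (\<forall>i m. - int n \<le> i \<longrightarrow> i + int m \<le> int n + 1 \<longrightarrow> legal \<theta> (seq_word (\<lambda>i. fst (G i)) i m)) \<and>
    ldiff (fst (snd (G 0))) (snd (snd (G 0)))"
proof -
  define N where "N = n + maxlen \<theta>"
  obtain u where u: "legal \<theta> u" "u \<noteq> []" "\<not> recognisable_radius \<theta> u N"
    using nl unfolding locally_recognisable_def by blast
  obtain ul ur d1 d2 where ud: "length ul = N" "length ur = N" "legal \<theta> (ul @ u @ ur)"
    "d1 \<in> infl_decomps \<theta> (ul @ u @ ur)" "d2 \<in> infl_decomps \<theta> (ul @ u @ ur)"
    "induced_decomp d1 N (length u) \<noteq> induced_decomp d2 N (length u)"
    using u(3) unfolding recognisable_radius_def by blast
  define W where "W = ul @ u @ ur"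
  have lW: "length W = N + length u + N" unfolding W_def using ud by simp
  have lu0: "0 < length u" using u(2) by simp
  have WL: "maxlen \<theta> < length W" using lW lu0 N_def by simp
  note b1 = infl_decomps_basic[OF ud(4)] and b2 = infl_decomps_basic[OF ud(5)]
  have cc: "concat (fst d1) = concat (fst d2)" using b1 b2 by simp
  have im: "N + length u \<le> length (concat (fst d1))" using b1 lW W_def by simp
  have "\<not> ((\<forall>j<length u. droot (fst d1, snd d1) (N+j) = droot (fst d2, snd d2) (N+j)) \<and>
    (\<forall>j. 0 < j \<and> j < length u \<longrightarrow> dstart (fst d1) (N+j) = dstart (fst d2) (N+j)))"
    using induced_eq_iff[of "fst d1" "fst d2" "snd d1" "snd d2" "length u" N] b1 b2 cc im ud(6) lu0
    by simp
  then obtain j where j: "j < length u" "droot d1 (N+j) \<noteq> droot d2 (N+j) \<or>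
      (0 < j \<and> dstart (fst d1) (N+j) \<noteq> dstart (fst d2) (N+j))" by auto
  have d1': "(fst d1, snd d1) \<in> infl_decomps \<theta> W" and d2': "(fst d2, snd d2) \<in> infl_decomps \<theta> W"
    using ud W_def by simp_all
  obtain l1 where l1: "LabWin \<theta> (\<lambda>j. W ! nat j) l1 0 (length W)"
    "\<forall>j. 0 < j \<and> j < length W \<longrightarrow> (snd (snd (l1 (int j))) = 0 \<longleftrightarrow> dstart (fst d1) j)"
    "\<forall>j<length W. fst (l1 (int j)) = droot (fst d1, snd d1) j"
    using decomp_lab[OF d1' two_pieces[OF rs ud(4)]] WL W_def by auto
  obtain l2 where l2: "LabWin \<theta> (\<lambda>j. W ! nat j) l2 0 (length W)"
    "\<forall>j. 0 < j \<and> j < length W \<longrightarrow> (snd (snd (l2 (int j))) = 0 \<longleftrightarrow> dstart (fst d2) j)"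
    "\<forall>j<length W. fst (l2 (int j)) = droot (fst d2, snd d2) j"
    using decomp_lab[OF d2' two_pieces[OF rs ud(5)]] WL W_def by auto
  define p where "p = N + j"
  have pb: "n \<le> p" "p + n < length W" using lW j(1) N_def p_def by auto
  define G where "G i = (W ! nat (i + int p), l1 (i + int p), l2 (i + int p))" for i
  have win: "LabWin \<theta> (\<lambda>i. W ! nat (i + int p)) (\<lambda>i. l (i + int p)) (- int n) (2*n+1)"
    if l: "LabWin \<theta> (\<lambda>j. W ! nat j) l 0 (length W)" for l
  proof -
    have "LabWin \<theta> (\<lambda>j. W ! nat j) l (int p - int n) (2*n+1)"
      by (rule LabWin_mono[OF l]) (use pb in auto)
    then have "LabWin \<theta> (\<lambda>i. W ! nat (i + int p)) (\<lambda>i. l (i + int p)) (int p - int n - int p) (2*n+1)"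
      by (rule LabWin_shift)
    then show ?thesis by simp
  qed
  have A: "LabWin \<theta> (\<lambda>i. fst (G i)) (\<lambda>i. fst (snd (G i))) (- int n) (2*n+1)"
    unfolding G_def using win[OF l1(1)] by simp
  have B: "LabWin \<theta> (\<lambda>i. fst (G i)) (\<lambda>i. snd (snd (G i))) (- int n) (2*n+1)"
    unfolding G_def using win[OF l2(1)] by simp
  have C: "\<forall>i m. - int n \<le> i \<longrightarrow> i + int m \<le> int n + 1 \<longrightarrow> legal \<theta> (seq_word (\<lambda>i. fst (G i)) i m)"
  proof (intro allI impI)
    fix i m assume im: "- int n \<le> i" "i + int m \<le> int n + 1"
    have "seq_word (\<lambda>i. fst (G i)) i m = seq_word (\<lambda>i. W ! nat i) (i + int p) m"
      unfolding G_def seq_word_def by (simp add: algebra_simps)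
    moreover have "sublist (seq_word (\<lambda>i. W ! nat i) (i + int p) m) W"
      by (rule seq_word_sublist) (use im pb in auto)
    moreover have "legal \<theta> W" using ud(3) W_def by simp
    ultimately show "legal \<theta> (seq_word (\<lambda>i. fst (G i)) i m)" using legal_sublist by metis
  qed
  have D: "ldiff (fst (snd (G 0))) (snd (snd (G 0)))"
  proof -
    have pW: "p < length W" using pb by simp
    have G0: "fst (snd (G 0)) = l1 (int p)" "snd (snd (G 0)) = l2 (int p)" unfolding G_def by simp_all
    from j(2) show ?thesis
    proof
      assume "droot d1 (N+j) \<noteq> droot d2 (N+j)"
      then have dp: "droot d1 p \<noteq> droot d2 p" using p_def by simp
      have "fst (l1 (int p)) = droot d1 p" using l1(3) pW by simp
      moreover have "fst (l2 (int p)) = droot d2 p" using l2(3) pW by simp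
      ultimately have "fst (l1 (int p)) \<noteq> fst (l2 (int p))" using dp by simp
      then show ?thesis unfolding ldiff_def G0 by simp
    next
      assume a: "0 < j \<and> dstart (fst d1) (N+j) \<noteq> dstart (fst d2) (N+j)"
      then have "0 < p" using p_def by simp
      have dp: "dstart (fst d1) p \<noteq> dstart (fst d2) p" using a p_def by simp
      have "(snd (snd (l1 (int p))) = 0) = dstart (fst d1) p" using l1(2) pW \<open>0 < p\<close> by blast
      moreover have "(snd (snd (l2 (int p))) = 0) = dstart (fst d2) p" using l2(2) pW \<open>0 < p\<close> by blast
      ultimately have "(snd (snd (l1 (int p))) = 0) \<noteq> (snd (snd (l2 (int p))) = 0)" using dp by simp
      then show ?thesis unfolding ldiff_def G0 by simp
    qed
  qed
  show ?thesis using A B C D by blast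
qed

lemma rec_loc:
  fixes \<theta> :: "'a::finite \<Rightarrow> 'a list set"
  assumes rs: "random_subst \<theta>" and cp: "compatible \<theta>" and rec: "recognisable \<theta>"
  shows "locally_recognisable \<theta>"
proof (rule ccontr)
  assume nl: "\<not> locally_recognisable \<theta>"
  have "\<forall>n. \<exists>G :: int \<Rightarrow> 'a \<times> 'a lab \<times> 'a lab.
    LabWin \<theta> (\<lambda>i. fst (G i)) (\<lambda>i. fst (snd (G i))) (- int n) (2*n+1) \<and>
    LabWin \<theta> (\<lambda>i. fst (G i)) (\<lambda>i. snd (snd (G i))) (- int n) (2*n+1) \<and>
    (\<forall>i m. - int n \<le> i \<longrightarrow> i + int m \<le> int n + 1 \<longrightarrow> legal \<theta> (seq_word (\<lambda>i. fst (G i)) i m)) \<and>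
    ldiff (fst (snd (G 0))) (snd (snd (G 0)))"
    using good_exists[OF rs nl] by blast
  then obtain Gf where Gf: "\<forall>n.
    LabWin \<theta> (\<lambda>i. fst (Gf n i)) (\<lambda>i. fst (snd (Gf n i))) (- int n) (2*n+1) \<and>
    LabWin \<theta> (\<lambda>i. fst (Gf n i)) (\<lambda>i. snd (snd (Gf n i))) (- int n) (2*n+1) \<and>
    (\<forall>i m. - int n \<le> i \<longrightarrow> i + int m \<le> int n + 1 \<longrightarrow> legal \<theta> (seq_word (\<lambda>i. fst (Gf n i)) i m)) \<and>
    ldiff (fst (snd (Gf n 0))) (snd (snd (Gf n 0)))"
    by metis
  define Xf where "Xf n i = fst (Gf n i)" for n i
  define L1 where "L1 n i = fst (snd (Gf n i))" for n i
  define L2 where "L2 n i = snd (snd (Gf n i))" for n i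
  have Hf: "\<forall>n. LabWin \<theta> (Xf n) (L1 n) (- int n) (2*n+1) \<and> LabWin \<theta> (Xf n) (L2 n) (- int n) (2*n+1)"
  proof
    fix n
    have "(Xf n) = (\<lambda>i. fst (Gf n i))" "(L1 n) = (\<lambda>i. fst (snd (Gf n i)))" "(L2 n) = (\<lambda>i. snd (snd (Gf n i)))"
      unfolding Xf_def L1_def L2_def by (simp_all add: fun_eq_iff)
    then show "LabWin \<theta> (Xf n) (L1 n) (- int n) (2*n+1) \<and> LabWin \<theta> (Xf n) (L2 n) (- int n) (2*n+1)"
      using Gf by simp
  qed
  obtain x l1 l2 where lim: "LabX \<theta> x l1" "LabX \<theta> x l2"
    "\<forall>M. \<exists>n\<ge>M. \<forall>j. \<bar>j\<bar> \<le> int M \<longrightarrow> x j = Xf n j \<and> l1 j = L1 n j \<and> l2 j = L2 n j"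
    using family_limit[OF rs Hf] by blast
  have xX: "x \<in> subshift \<theta>" unfolding subshift_def
  proof (intro CollectI allI)
    fix i m
    obtain n where n: "n \<ge> nat \<bar>i\<bar> + m" "\<forall>j. \<bar>j\<bar> \<le> int (nat \<bar>i\<bar> + m) \<longrightarrow> x j = Xf n j \<and> l1 j = L1 n j \<and> l2 j = L2 n j"
      using lim(3) by blast
    have "seq_word x i m = seq_word (Xf n) i m"
      unfolding seq_word_def using n(2) by (auto intro!: map_cong)
    moreover have "legal \<theta> (seq_word (\<lambda>i. fst (Gf n i)) i m)" using Gf n(1) by auto
    moreover have "Xf n = (\<lambda>i. fst (Gf n i))" unfolding Xf_def by (simp add: fun_eq_iff)
    ultimately show "legal \<theta> (seq_word x i m)" by simp
  qed
  have dif: "ldiff (l1 0) (l2 0)"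
  proof -
    obtain n where n: "\<forall>j. \<bar>j\<bar> \<le> int 0 \<longrightarrow> x j = Xf n j \<and> l1 j = L1 n j \<and> l2 j = L2 n j"
      using lim(3) by blast
    then have "l1 0 = L1 n 0" "l2 0 = L2 n 0" by auto
    then show ?thesis using Gf unfolding L1_def L2_def by simp
  qed
  obtain y1 where y1: "y1 \<in> subshift \<theta>" "snd (snd (l1 0)) < infl_len \<theta> (y1 0)"
    "shift_pow (- int (snd (snd (l1 0)))) x \<in> subst_seq \<theta> y1" "y1 0 = fst (l1 0)"
    using lab_rep[OF cp lim(1)] by blast
  obtain y2 where y2: "y2 \<in> subshift \<theta>" "snd (snd (l2 0)) < infl_len \<theta> (y2 0)"
    "shift_pow (- int (snd (snd (l2 0)))) x \<in> subst_seq \<theta> y2" "y2 0 = fst (l2 0)"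
    using lab_rep[OF cp lim(2)] by blast
  let ?P = "\<lambda>p. case p of (y, k) \<Rightarrow> y \<in> subshift \<theta> \<and> k < infl_len \<theta> (y 0) \<and>
      shift_pow (- int k) x \<in> subst_seq \<theta> y"
  have ex1: "\<exists>!p. ?P p" using rec xX unfolding recognisable_def by blast
  have "?P (y1, snd (snd (l1 0)))" "?P (y2, snd (snd (l2 0)))" using y1 y2 by simp_all
  then have "(y1, snd (snd (l1 0))) = (y2, snd (snd (l2 0)))" using ex1 unfolding Ex1_def by blast
  then show False using dif y1(4) y2(4) unfolding ldiff_def by simp
qed

theorem main:
  fixes \<theta> :: "'a::finite \<Rightarrow> 'a list set"
  assumes "random_subst \<theta>" and "compatible \<theta>"
  shows "recognisable \<theta> \<longleftrightarrow> locally_recognisable \<theta>"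
  using rec_loc[OF assms] loc_rec[OF assms] by blast


theorem proposition5p7:
  fixes \<theta> :: "'a::finite \<Rightarrow> 'a list set"
  assumes "random_subst \<theta>" and "compatible \<theta>"
  shows "recognisable \<theta> \<longleftrightarrow> locally_recognisable \<theta>"
  using main[OF assms] .

end
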